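(* Let $s>1/2$ and $0<\epsilon<\min\{1,2s-1\}$. Then there exist $\sigma\in(0,1)$ and $C>0$ such that for all $u_1,u_2,u_3\in H^s(\mathbb{R})$, $\|T_\sigma(u_1,u_2,u_3)\|_{H^{s+\epsilon}}\le C\prod_{j=1}^3\|u_j\|_{H^s}$.
   Context: (Cubic term $-i|w|^2\partial_x\bar w$ of the gauge-transformed derivative NLS $iw_t+w_{xx}=-i|w|^2\partial_x\bar w-\frac12|w|^4w$.) $\langle a\rangle=(1+|a|^2)^{1/2}$; $\Xi=(\xi,\xi_1,\xi_2,\xi_3)$, $\Phi(\Xi)=\xi^2-\xi_1^2+\xi_2^2-\xi_3^2=2(\xi-\xi_1)(\xi-\xi_3)$, $m(\Xi)=\xi_2$, and $\mathcal{F}[T_\sigma(u_1,u_2,u_3)](\xi)=\int_{\xi_1+\xi_2+\xi_3=\xi}\langle\Phi(\Xi)\rangle^{-\sigma}m(\Xi)\hat u_1(\xi_1)\hat u_2(\xi_2)\hat u_3(\xi_3)\,d\xi_1d\xi_3$. *)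

theory Defs
  imports "HOL-Analysis.Analysis"
begin

definition japan :: "real \<Rightarrow> real" where
  "japan a = sqrt (1 + a\<^sup>2)"

definition Phi :: "real \<Rightarrow> real \<Rightarrow> real \<Rightarrow> real \<Rightarrow> real" where
  "Phi \<xi> \<xi>1 \<xi>2 \<xi>3 = \<xi>\<^sup>2 - \<xi>1\<^sup>2 + \<xi>2\<^sup>2 - \<xi>3\<^sup>2"

text \<open>The functions f1 f2 f3 play the role of the Fourier transforms of u1 u2 u3.\<close>
definition T_integrand ::
  "real \<Rightarrow> (real \<Rightarrow> complex) \<Rightarrow> (real \<Rightarrow> complex) \<Rightarrow> (real \<Rightarrow> complex)
    \<Rightarrow> real \<Rightarrow> real \<times> real \<Rightarrow> complex" where
  "T_integrand \<sigma> f1 f2 f3 \<xi> p =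
     (let \<xi>1 = fst p; \<xi>3 = snd p; \<xi>2 = \<xi> - \<xi>1 - \<xi>3 in
      complex_of_real (japan (Phi \<xi> \<xi>1 \<xi>2 \<xi>3) powr (- \<sigma>) * \<xi>2)
        * f1 \<xi>1 * f2 \<xi>2 * f3 \<xi>3)"

text \<open>Fourier transform of T_sigma(u1,u2,u3), given hat u_j = f_j.\<close>
definition T_hat ::
  "real \<Rightarrow> (real \<Rightarrow> complex) \<Rightarrow> (real \<Rightarrow> complex) \<Rightarrow> (real \<Rightarrow> complex)
    \<Rightarrow> real \<Rightarrow> complex" where
  "T_hat \<sigma> f1 f2 f3 \<xi> = (\<integral> p. T_integrand \<sigma> f1 f2 f3 \<xi> p \<partial>lborel)"

text \<open>f is the Fourier transform of an H^s function: measurable with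
  <xi>^s f in L^2.\<close>
definition in_Hs_hat :: "real \<Rightarrow> (real \<Rightarrow> complex) \<Rightarrow> bool" where
  "in_Hs_hat s f \<longleftrightarrow> f \<in> borel_measurable lborel \<and>
     integrable lborel (\<lambda>\<xi>. japan \<xi> powr (2 * s) * (cmod (f \<xi>))\<^sup>2)"

definition Hs_norm_hat :: "real \<Rightarrow> (real \<Rightarrow> complex) \<Rightarrow> real" where
  "Hs_norm_hat s f = sqrt (\<integral> \<xi>. japan \<xi> powr (2 * s) * (cmod (f \<xi>))\<^sup>2 \<partial>lborel)"

end

theory Submission
  imports Defs "HOL-Analysis.Analysis"
begin

lemma japan_meas[measurable]: "japan \<in> borel_measurable borel"
  unfolding japan_def by measurable

lemma japan_pos: "0 < japan x"
  unfolding japan_def by (simp add: add_pos_nonneg)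

lemma japan_ge1: "1 \<le> japan x"
  unfolding japan_def by simp

lemma japan_ge_abs: "\<bar>x\<bar> \<le> japan x"
  unfolding japan_def by (rule real_le_rsqrt) simp

lemma japan_sq: "(japan x)\<^sup>2 = 1 + x\<^sup>2"
  unfolding japan_def by simp

lemma japan_minus: "japan (- x) = japan x"
  unfolding japan_def by simp

lemma japan_le_scale:
  assumes "\<bar>x\<bar> \<le> c * \<bar>t\<bar>" "1 \<le> c"
  shows "japan x \<le> c * japan t"
proof -
  have "\<bar>x\<bar>\<^sup>2 \<le> (c * \<bar>t\<bar>)\<^sup>2" using assms by (intro power_mono) auto
  hence a: "x\<^sup>2 \<le> c\<^sup>2 * t\<^sup>2" by (simp add: power_mult_distrib)
  have b: "1 \<le> c\<^sup>2" using assms by (simp add: one_le_power)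
  have "1 + x\<^sup>2 \<le> c\<^sup>2 * (1 + t\<^sup>2)" using a b by (simp add: algebra_simps)
  also have "\<dots> = (c * japan t)\<^sup>2" by (simp add: power_mult_distrib japan_sq)
  finally show ?thesis unfolding japan_def
    by (intro real_le_lsqrt) (use assms japan_pos[of t] in auto)
qed

lemma japan_ge_scale:
  assumes "c * \<bar>t\<bar> \<le> \<bar>x\<bar>" "0 \<le> c" "c \<le> 1"
  shows "c * japan t \<le> japan x"
proof -
  have "(c * \<bar>t\<bar>)\<^sup>2 \<le> \<bar>x\<bar>\<^sup>2" using assms by (intro power_mono) auto
  hence a: "c\<^sup>2 * t\<^sup>2 \<le> x\<^sup>2" by (simp add: power_mult_distrib)
  have b: "c\<^sup>2 \<le> 1" using assms by (simp add: power_le_one)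
  have "(c * japan t)\<^sup>2 = c\<^sup>2 * (1 + t\<^sup>2)" by (simp add: power_mult_distrib japan_sq)
  also have "\<dots> \<le> 1 + x\<^sup>2" using a b by (simp add: algebra_simps)
  finally show ?thesis unfolding japan_def by (rule real_le_rsqrt)
qed

lemma japan_add: "japan (x + y) \<le> japan x + \<bar>y\<bar>"
proof -
  have "x * y \<le> \<bar>x\<bar> * \<bar>y\<bar>" by (simp add: abs_mult[symmetric])
  also have "\<dots> \<le> japan x * \<bar>y\<bar>" by (intro mult_right_mono japan_ge_abs) auto
  finally have xy: "x * y \<le> japan x * \<bar>y\<bar>" .
  have "1 + (x+y)\<^sup>2 = (japan x)\<^sup>2 + 2 * (x * y) + \<bar>y\<bar>\<^sup>2"
    unfolding japan_sq by (simp add: power2_eq_square algebra_simps)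
  also have "\<dots> \<le> (japan x)\<^sup>2 + 2 * (japan x * \<bar>y\<bar>) + \<bar>y\<bar>\<^sup>2" using xy by simp
  also have "\<dots> = (japan x + \<bar>y\<bar>)\<^sup>2" by (simp add: power2_eq_square algebra_simps)
  finally show ?thesis unfolding japan_def
    by (intro real_le_lsqrt) (use japan_pos[of x] in auto)
qed

lemma japan_peetre: "japan (x + y) \<le> sqrt 2 * japan x * japan y"
proof -
  have "(x+y)\<^sup>2 \<le> 2 * x\<^sup>2 + 2 * y\<^sup>2"
    using sum_squares_bound[of x y] by (simp add: power2_eq_square algebra_simps)
  moreover have "0 \<le> x\<^sup>2 * y\<^sup>2" by simp
  moreover have "2 * (1 + x\<^sup>2) * (1 + y\<^sup>2) = 2 + 2 * x\<^sup>2 + 2 * y\<^sup>2 + 2 * (x\<^sup>2 * y\<^sup>2)"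
    by (simp add: algebra_simps)
  ultimately have "1 + (x+y)\<^sup>2 \<le> 2 * (1 + x\<^sup>2) * (1 + y\<^sup>2)"
    by linarith
  hence "sqrt (1 + (x+y)\<^sup>2) \<le> sqrt (2 * (1 + x\<^sup>2) * (1 + y\<^sup>2))" by (rule real_sqrt_le_mono)
  thus ?thesis unfolding japan_def by (simp only: real_sqrt_mult)
qed

lemma japan_mono: "\<bar>x\<bar> \<le> \<bar>y\<bar> \<Longrightarrow> japan x \<le> japan y"
  using japan_le_scale[of x 1 y] by simp

lemma japan_le: "japan x \<le> 1 + \<bar>x\<bar>"
  using japan_add[of 0 x] by (simp add: japan_def)

definition K0 :: "real \<Rightarrow> real \<Rightarrow> real \<Rightarrow> real \<Rightarrow> real \<Rightarrow> real \<Rightarrow> real" where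
  "K0 s \<epsilon> \<sigma> \<xi> \<xi>1 \<xi>3 = japan \<xi> powr (s+\<epsilon>) * \<bar>\<xi>-\<xi>1-\<xi>3\<bar> * japan (2*(\<xi>-\<xi>1)*(\<xi>-\<xi>3)) powr (-\<sigma>)
      / (japan \<xi>1 powr s * japan (\<xi>-\<xi>1-\<xi>3) powr s * japan \<xi>3 powr s)"

definition psiR :: "real \<Rightarrow> real \<Rightarrow> real \<Rightarrow> real \<Rightarrow> real \<Rightarrow> real" where
  "psiR \<epsilon> \<sigma> q a b = (1 + japan b powr (1+\<epsilon>) * japan (b-a) powr (-q)) * japan (2*a*b) powr (-\<sigma>)"

lemma jp_powr: "japan x powr r = exp (r * ln (japan x))"
  using japan_pos[of x] by (simp add: powr_def mult.commute)

lemma ln_jp_nonneg: "0 \<le> ln (japan x)"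
  using japan_ge1[of x] by simp

lemma ln_jp_mono: "japan x \<le> c * japan y \<Longrightarrow> 0 < c \<Longrightarrow> ln (japan x) \<le> ln c + ln (japan y)"
proof -
  assume h: "japan x \<le> c * japan y" "0 < c"
  hence "ln (japan x) \<le> ln (c * japan y)" using japan_pos[of x] japan_pos[of y] by (subst ln_le_cancel_iff) simp_all
  also have "\<dots> = ln c + ln (japan y)" using h japan_pos[of y] by (simp add: ln_mult)
  finally show ?thesis .
qed

lemma ln_jp_mono': "c * japan y \<le> japan x \<Longrightarrow> 0 < c \<Longrightarrow> ln c + ln (japan y) \<le> ln (japan x)"
proof -
  assume h: "c * japan y \<le> japan x" "0 < c"
  have "ln c + ln (japan y) = ln (c * japan y)" using h japan_pos[of y] by (simp add: ln_mult)
  also have "\<dots> \<le> ln (japan x)" using h japan_pos[of x] japan_pos[of y] by (subst ln_le_cancel_iff) simp_all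
  finally show ?thesis .
qed

lemma arith_A:
  fixes s \<epsilon> q La L2 L1 L3 Lb Lc l5 l2 :: real
  assumes "(s+\<epsilon>) * La \<le> (s+\<epsilon>) * (l5 + Lb)"
  and "(1-s) * L2 \<le> (1-s) * (l5 + Lb)"
  and "q * Lc \<le> s * Lc" and "s * Lc \<le> s * (l2 / 2 + L1 + L3)"
  shows "(s+\<epsilon>) * La + (1-s) * L2 - s * L1 - s * L3 \<le> (1+\<epsilon>) * l5 + (1+\<epsilon>) * Lb - q * Lc + s * l2 / 2"
  using assms unfolding ring_distribs by linarith

lemma arith_B:
  fixes s \<epsilon> q La L2 L1 L3 Lb Lc l5 l2 :: real
  assumes "(1+\<epsilon>) * La \<le> (1+\<epsilon>) * (l5 + Lb)"
  and "(s-1) * La \<le> (s-1) * (l2 + L1 + L2 + L3)"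
  and "q * Lc \<le> 1 * Lc" and "Lc \<le> l2 / 2 + L1 + L3"
  shows "(s+\<epsilon>) * La + (1-s) * L2 - s * L1 - s * L3 \<le> (1+\<epsilon>) * l5 + (1+\<epsilon>) * Lb - q * Lc + (s - 1) * l2 + l2 / 2"
  using assms unfolding ring_distribs by linarith

lemma kernel_bound:
  fixes s \<epsilon> \<sigma> q :: real
  assumes s_gt: "1/2 < s" and eps_pos: "0 < \<epsilon>" and eps_lt: "1 + \<epsilon> < 2 * min s 1"
    and q_pos: "0 < q" and q_le: "q \<le> min s 1"
    and sig: "0 \<le> \<sigma>"
    and ab: "\<bar>\<xi>-\<xi>1\<bar> \<le> \<bar>\<xi>-\<xi>3\<bar>"
  shows "K0 s \<epsilon> \<sigma> \<xi> \<xi>1 \<xi>3 \<le> exp ((3 * s + 3) * ln 5) * psiR \<epsilon> \<sigma> q (\<xi>-\<xi>1) (\<xi>-\<xi>3)"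
proof -
  define a where "a = \<xi> - \<xi>1"
  define b where "b = \<xi> - \<xi>3"
  define t where "t = \<xi>3"
  define c where "c = b - a"
  define \<xi>2 where "\<xi>2 = \<xi> - \<xi>1 - \<xi>3"
  define L where "L = (\<lambda>x. ln (japan x))"
  have Lnn: "\<And>x. 0 \<le> L x" unfolding L_def by (rule ln_jp_nonneg)
  define E where "E = (s+\<epsilon>) * L \<xi> + (1-s) * L \<xi>2 - s * L \<xi>1 - s * L \<xi>3"
  define JP where "JP = japan (2*a*b) powr (-\<sigma>)"
  have JPnn: "0 \<le> JP" unfolding JP_def by simp
  have c_eq: "c = \<xi>1 + (- \<xi>3)" unfolding c_def a_def b_def by simp
  have xi_eq: "\<xi> = b + t" unfolding b_def t_def by simp
  have xi2_eq: "\<xi>2 = a + (- t)" unfolding \<xi>2_def a_def t_def by simp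
  have xi1_eq: "\<xi>1 = c + t" unfolding c_def a_def b_def t_def by simp
  have ab': "\<bar>a\<bar> \<le> \<bar>b\<bar>" using ab unfolding a_def b_def .
  have K0eq: "K0 s \<epsilon> \<sigma> \<xi> \<xi>1 \<xi>3 = exp ((s+\<epsilon>) * L \<xi>) * \<bar>\<xi>2\<bar> * JP / (exp (s * L \<xi>1) * exp (s * L \<xi>2) * exp (s * L \<xi>3))"
    unfolding K0_def JP_def L_def \<xi>2_def a_def b_def by (simp add: jp_powr)
  have "\<bar>\<xi>2\<bar> \<le> exp (L \<xi>2)" unfolding L_def using japan_pos[of \<xi>2] japan_ge_abs[of \<xi>2] by simp
  hence "K0 s \<epsilon> \<sigma> \<xi> \<xi>1 \<xi>3 \<le> exp ((s+\<epsilon>) * L \<xi>) * exp (L \<xi>2) * JP / (exp (s * L \<xi>1) * exp (s * L \<xi>2) * exp (s * L \<xi>3))"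
    unfolding K0eq using JPnn by (intro divide_right_mono mult_right_mono mult_left_mono) auto
  also have "\<dots> = exp E * JP"
    unfolding E_def by (simp add: exp_add[symmetric] algebra_simps) (simp add: exp_diff)
  finally have step1: "K0 s \<epsilon> \<sigma> \<xi> \<xi>1 \<xi>3 \<le> exp E * JP" .
  define \<kappa> where "\<kappa> = (3 * s + 3) * ln (5::real)"
  have ln2: "0 \<le> ln (2::real)" "ln (2::real) \<le> ln 5" by auto
  have ln54: "0 \<le> ln (5/4::real)" "ln (5/4::real) \<le> ln 5" by auto
  have ln43: "0 \<le> ln (4/3::real)" "ln (4/3::real) \<le> ln 5" by auto
  have ln34: "ln (3/4::real) = - ln (4/3)" by (simp add: ln_div)
  have ln12: "ln (1/2::real) = - ln 2" by (simp add: ln_div)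
  have lns2: "ln (sqrt 2) = ln 2 / 2" by (simp add: ln_sqrt)
  have Ebound: "E \<le> \<kappa> \<or> E \<le> \<kappa> + (1+\<epsilon>) * L b - q * L c"
  proof (cases "4 * japan b \<le> \<bar>t\<bar>")
    case True
    have jb: "\<bar>b\<bar> \<le> \<bar>t\<bar> / 4" using True japan_ge_abs[of b] by simp
    have tnn: "0 \<le> \<bar>t\<bar>" by simp
    have a1: "\<bar>\<xi>\<bar> \<le> 5/4 * \<bar>t\<bar>" using jb abs_triangle_ineq[of b t] unfolding xi_eq by linarith
    have a2: "\<bar>\<xi>2\<bar> \<le> 5/4 * \<bar>t\<bar>" using jb ab' abs_triangle_ineq[of a "-t"] unfolding xi2_eq by linarith
    have "\<bar>t\<bar> \<le> \<bar>a + - t\<bar> + \<bar>a\<bar>" using abs_triangle_ineq[of "a + - t" "-a"] by simp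
    hence a3: "3/4 * \<bar>t\<bar> \<le> \<bar>\<xi>2\<bar>" using jb ab' unfolding xi2_eq by linarith
    have cb: "\<bar>c\<bar> \<le> 2 * \<bar>b\<bar>" using ab' abs_triangle_ineq4[of b a] unfolding c_def by linarith
    have "\<bar>t\<bar> \<le> \<bar>c + t\<bar> + \<bar>c\<bar>" using abs_triangle_ineq[of "c + t" "-c"] by simp
    hence a4: "1/2 * \<bar>t\<bar> \<le> \<bar>\<xi>1\<bar>" using jb cb unfolding xi1_eq by linarith
    have h1: "L \<xi> \<le> ln (5/4) + L t" unfolding L_def
      by (rule ln_jp_mono, rule japan_le_scale[OF a1]) simp_all
    have h2: "L \<xi>2 \<le> ln (5/4) + L t" unfolding L_def
      by (rule ln_jp_mono, rule japan_le_scale[OF a2]) simp_all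
    have h3: "ln (3/4) + L t \<le> L \<xi>2" unfolding L_def
      by (rule ln_jp_mono', rule japan_ge_scale[OF a3]) simp_all
    have h4: "ln (1/2) + L t \<le> L \<xi>1" unfolding L_def
      by (rule ln_jp_mono', rule japan_ge_scale[OF a4]) simp_all
    have neg: "(1 + \<epsilon> - 2 * s) * L t \<le> 0"
      using eps_lt Lnn[of t] by (intro mult_nonpos_nonneg) auto
    have m1: "(s+\<epsilon>) * L \<xi> \<le> (s+\<epsilon>) * (ln (5/4) + L t)"
      using h1 s_gt eps_pos by (intro mult_left_mono) auto
    have m4: "s * (ln (1/2) + L t) \<le> s * L \<xi>1"
      using h4 s_gt by (intro mult_left_mono) auto
    have "E \<le> \<kappa>"
    proof (cases "s \<le> 1")
      case True
      have m2: "(1-s) * L \<xi>2 \<le> (1-s) * (ln (5/4) + L t)"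
        using h2 True by (intro mult_left_mono) auto
      have "E \<le> (1 + \<epsilon> - 2 * s) * L t + (s+\<epsilon>) * ln (5/4) + (1-s) * ln (5/4) + s * ln 2"
        using m1[unfolded ring_distribs] m2[unfolded ring_distribs] m4[unfolded ring_distribs ln12] unfolding E_def t_def ring_distribs by linarith
      moreover have "(s+\<epsilon>) * ln (5/4) \<le> (s+1) * ln (5::real)"
        using ln54 eps_lt s_gt by (intro mult_mono) auto
      moreover have "(1-s) * ln (5/4) \<le> 1 * ln (5::real)"
        using ln54 True s_gt by (intro mult_mono) auto
      moreover have "s * ln 2 \<le> s * ln (5::real)"
        using ln2 s_gt by (intro mult_left_mono) auto
      moreover have "0 \<le> s * ln (5::real)" "0 \<le> ln (5::real)" using s_gt by simp_all
      ultimately show ?thesis using neg unfolding \<kappa>_def ring_distribs by linarith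
    next
      case False
      have m2: "(s-1) * (ln (3/4) + L t) \<le> (s-1) * L \<xi>2"
        using h3 False by (intro mult_left_mono) auto
      have "E \<le> (1 + \<epsilon> - 2 * s) * L t + (s+\<epsilon>) * ln (5/4) + (s-1) * ln (4/3) + s * ln 2"
        using m1[unfolded ring_distribs] m2[unfolded ring_distribs ln34] m4[unfolded ring_distribs ln12] unfolding E_def t_def ring_distribs by linarith
      moreover have "(s+\<epsilon>) * ln (5/4) \<le> (s+1) * ln (5::real)"
        using ln54 eps_lt s_gt by (intro mult_mono) auto
      moreover have "(s-1) * ln (4/3) \<le> s * ln (5::real)"
        using ln43 False by (intro mult_mono) auto
      moreover have "s * ln 2 \<le> s * ln (5::real)"
        using ln2 s_gt by (intro mult_left_mono) auto
      moreover have "0 \<le> s * ln (5::real)" "0 \<le> ln (5::real)" using s_gt by simp_all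
      ultimately show ?thesis using neg unfolding \<kappa>_def ring_distribs by linarith
    qed
    thus ?thesis ..
  next
    case False
    have tb: "\<bar>t\<bar> \<le> 4 * japan b" using False by simp
    have ja: "japan a \<le> japan b" using ab' by (rule japan_mono)
    have "japan \<xi> \<le> 5 * japan b" using japan_add[of b t] tb unfolding xi_eq by linarith
    hence h1: "L \<xi> \<le> ln 5 + L b" unfolding L_def by (rule ln_jp_mono) simp
    have "japan \<xi>2 \<le> 5 * japan b" using japan_add[of a "-t"] tb ja unfolding xi2_eq by simp
    hence h2: "L \<xi>2 \<le> ln 5 + L b" unfolding L_def by (rule ln_jp_mono) simp
    have "japan c \<le> sqrt 2 * (japan \<xi>1 * japan \<xi>3)"
      using japan_peetre[of \<xi>1 "-\<xi>3"] unfolding c_eq by (simp add: japan_minus mult.assoc)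
    hence "ln (japan c) \<le> ln (sqrt 2 * (japan \<xi>1 * japan \<xi>3))"
      using japan_pos[of c] japan_pos[of \<xi>1] japan_pos[of \<xi>3] by (subst ln_le_cancel_iff) simp_all
    also have "\<dots> = ln (sqrt 2) + ln (japan \<xi>1) + ln (japan \<xi>3)"
      using japan_pos[of \<xi>1] japan_pos[of \<xi>3] by (simp add: ln_mult)
    finally have h3: "L c \<le> ln 2 / 2 + L \<xi>1 + L \<xi>3" unfolding L_def lns2 .
    have Lcnn: "0 \<le> L c" by (rule Lnn)
    have m1: "(1+\<epsilon>) * L \<xi> \<le> (1+\<epsilon>) * (ln 5 + L b)"
      using h1 eps_pos by (intro mult_left_mono) simp_all
    have "E \<le> \<kappa> + (1+\<epsilon>) * L b - q * L c"
    proof (cases "s \<le> 1")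
      case True
      have m2: "(1-s) * L \<xi>2 \<le> (1-s) * (ln 5 + L b)"
        using h2 True by (intro mult_left_mono) simp_all
      have m1': "(s+\<epsilon>) * L \<xi> \<le> (s+\<epsilon>) * (ln 5 + L b)"
        using h1 eps_pos s_gt by (intro mult_left_mono) simp_all
      have m3: "q * L c \<le> s * L c" using q_le Lcnn by (intro mult_right_mono) simp_all
      have m4: "s * L c \<le> s * (ln 2 / 2 + L \<xi>1 + L \<xi>3)" using h3 s_gt by (intro mult_left_mono) simp_all
      have "E \<le> (1+\<epsilon>) * ln 5 + (1+\<epsilon>) * L b - q * L c + s * ln 2 / 2"
        unfolding E_def by (rule arith_A[OF m1' m2 m3 m4])
      moreover have "\<epsilon> * ln 5 \<le> 1 * ln (5::real)" using eps_lt by (intro mult_right_mono) simp_all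
      moreover have "s * ln 2 \<le> s * ln (5::real)" using s_gt by (intro mult_left_mono) simp_all
      moreover have "0 \<le> s * ln (5::real)" "0 \<le> ln (5::real)" "0 \<le> ln (2::real)" using s_gt by simp_all
      ultimately show ?thesis unfolding \<kappa>_def ring_distribs by linarith
    next
      case False
      have "japan \<xi> \<le> 2 * (japan \<xi>1 * japan \<xi>2 * japan \<xi>3)"
      proof -
        have "japan \<xi> \<le> sqrt 2 * japan \<xi>1 * japan (\<xi>2 + \<xi>3)"
          using japan_peetre[of \<xi>1 "\<xi>2 + \<xi>3"] unfolding \<xi>2_def by simp
        also have "\<dots> \<le> sqrt 2 * japan \<xi>1 * (sqrt 2 * japan \<xi>2 * japan \<xi>3)"
          using japan_pos[of \<xi>1] by (intro mult_left_mono japan_peetre) simp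
        also have "\<dots> = 2 * (japan \<xi>1 * japan \<xi>2 * japan \<xi>3)"
          by (simp add: algebra_simps)
        finally show ?thesis .
      qed
      hence "ln (japan \<xi>) \<le> ln (2 * (japan \<xi>1 * japan \<xi>2 * japan \<xi>3))"
        using japan_pos[of \<xi>] japan_pos[of \<xi>1] japan_pos[of \<xi>2] japan_pos[of \<xi>3] by (subst ln_le_cancel_iff) simp_all
      also have "\<dots> = ln 2 + ln (japan \<xi>1) + ln (japan \<xi>2) + ln (japan \<xi>3)"
        using japan_pos[of \<xi>1] japan_pos[of \<xi>2] japan_pos[of \<xi>3] by (simp add: ln_mult)
      finally have h4: "L \<xi> \<le> ln 2 + L \<xi>1 + L \<xi>2 + L \<xi>3" unfolding L_def .
      have m0: "(s-1) * L \<xi> \<le> (s-1) * (ln 2 + L \<xi>1 + L \<xi>2 + L \<xi>3)"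
        using h4 False by (intro mult_left_mono) simp_all
      have m3: "q * L c \<le> 1 * L c" using q_le Lcnn by (intro mult_right_mono) simp_all
      have "E \<le> (1+\<epsilon>) * ln 5 + (1+\<epsilon>) * L b - q * L c + (s - 1) * ln 2 + ln 2 / 2"
        unfolding E_def by (rule arith_B[OF m1 m0 m3 h3])
      moreover have "\<epsilon> * ln 5 \<le> 1 * ln (5::real)" using eps_lt by (intro mult_right_mono) simp_all
      moreover have "s * ln 2 \<le> s * ln (5::real)" using s_gt by (intro mult_left_mono) simp_all
      moreover have "0 \<le> s * ln (5::real)" "0 \<le> ln (5::real)" "0 \<le> ln (2::real)" "ln 2 \<le> ln (5::real)" using s_gt by simp_all
      ultimately show ?thesis unfolding \<kappa>_def ring_distribs by linarith
    qed
    thus ?thesis ..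
  qed
  define X where "X = (1+\<epsilon>) * L b - q * L c"
  have "exp E \<le> exp \<kappa> * (1 + exp X)"
  proof (cases "E \<le> \<kappa>")
    case True
    hence "exp E \<le> exp \<kappa> * 1" by simp
    also have "\<dots> \<le> exp \<kappa> * (1 + exp X)" by (intro mult_left_mono) simp_all
    finally show ?thesis .
  next
    case False
    hence "E \<le> \<kappa> + X" using Ebound unfolding X_def by linarith
    hence "exp E \<le> exp (\<kappa> + X)" by simp
    hence "exp E \<le> exp \<kappa> * exp X" by (simp only: exp_add)
    also have "\<dots> \<le> exp \<kappa> * (1 + exp X)" by (intro mult_left_mono) simp_all
    finally show ?thesis .
  qed
  hence "exp E * JP \<le> exp \<kappa> * (1 + exp X) * JP" using JPnn by (rule mult_right_mono)
  also have "exp \<kappa> * (1 + exp X) * JP = exp \<kappa> * psiR \<epsilon> \<sigma> q (\<xi>-\<xi>1) (\<xi>-\<xi>3)"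
  proof -
    have "japan b powr (1+\<epsilon>) * japan c powr (-q) = exp X"
      unfolding X_def L_def jp_powr mult_exp_exp by simp
    moreover have "psiR \<epsilon> \<sigma> q (\<xi>-\<xi>1) (\<xi>-\<xi>3) = (1 + japan b powr (1+\<epsilon>) * japan c powr (-q)) * JP"
      unfolding psiR_def JP_def c_def a_def b_def ..
    ultimately show ?thesis by (simp only: mult.assoc)
  qed
  finally have "exp E * JP \<le> exp \<kappa> * psiR \<epsilon> \<sigma> q (\<xi>-\<xi>1) (\<xi>-\<xi>3)" .
  with step1 show ?thesis unfolding \<kappa>_def by (rule order_trans)
qed

definition Hk :: "real \<Rightarrow> real \<Rightarrow> real \<Rightarrow> real \<Rightarrow> real" where
  "Hk c R p x = indicator {y. \<bar>y - c\<bar> \<le> R} x * \<bar>x - c\<bar> powr (-p)"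

lemma Hk_meas[measurable]: "Hk c R p \<in> borel_measurable borel"
  unfolding Hk_def by measurable

lemma Hk_nonneg: "0 \<le> Hk c R p x"
  unfolding Hk_def by simp

lemma int_pow0:
  assumes R: "0 \<le> R" and p: "0 \<le> p" "p < 1"
  shows "(\<integral>\<^sup>+x. ennreal (indicator {0..R} x * x powr (-p)) \<partial>lborel) = ennreal (R powr (1-p) / (1-p))"
proof -
  have "((\<lambda>x. x powr (-p)) has_integral (R powr (-p+1) / (-p+1))) {0..R}"
    using p R by (intro has_integral_powr_from_0) auto
  hence "((\<lambda>x. if x \<in> {0..R} then x powr (-p) else 0) has_integral (R powr (1-p) / (1-p))) UNIV"
    by (subst has_integral_restrict_UNIV) (simp add: add.commute)
  moreover have "(\<lambda>x. if x \<in> {0..R} then x powr (-p) else 0) = (\<lambda>x. indicator {0..R} x * x powr (-p))"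
    by (auto simp: indicator_def)
  ultimately have hi: "((\<lambda>x. indicator {0..R} x * x powr (-p)) has_integral (R powr (1-p) / (1-p))) UNIV"
    by simp
  have "integral\<^sup>N lborel (\<lambda>x. indicator {0..R} x * x powr (-p)) = ennreal (R powr (1-p) / (1-p))"
    by (rule nn_integral_has_integral_lborel[OF _ _ hi]) (auto simp: indicator_def)
  thus ?thesis by simp
qed

lemma int_Hk:
  assumes R: "0 \<le> R" and p: "0 \<le> p" "p < 1"
  shows "(\<integral>\<^sup>+x. ennreal (Hk c R p x) \<partial>lborel) = ennreal (2 * (R powr (1-p) / (1-p)))"
proof -
  define g where "g = (\<lambda>x::real. indicator {0..R} x * x powr (-p))"
  have gm[measurable]: "g \<in> borel_measurable borel" unfolding g_def by measurable
  have gnn: "\<And>x. 0 \<le> g x" unfolding g_def by (simp add: indicator_def)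
  have pt: "Hk c R p x = g (x - c) + g (c - x)" for x
    unfolding Hk_def g_def by (cases "x \<le> c") (auto simp: indicator_def abs_if)
  have "(\<integral>\<^sup>+x. ennreal (Hk c R p x) \<partial>lborel) = (\<integral>\<^sup>+x. ennreal (g (x - c)) + ennreal (g (c - x)) \<partial>lborel)"
    by (intro nn_integral_cong) (simp add: pt gnn)
  also have "\<dots> = (\<integral>\<^sup>+x. ennreal (g (x - c)) \<partial>lborel) + (\<integral>\<^sup>+x. ennreal (g (c - x)) \<partial>lborel)"
    by (rule nn_integral_add) auto
  also have "(\<integral>\<^sup>+x. ennreal (g (x - c)) \<partial>lborel) = (\<integral>\<^sup>+x. ennreal (g x) \<partial>lborel)"
    using nn_integral_real_affine[of "\<lambda>x. ennreal (g x)" 1 "-c"] by simp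
  also have "(\<integral>\<^sup>+x. ennreal (g (c - x)) \<partial>lborel) = (\<integral>\<^sup>+x. ennreal (g x) \<partial>lborel)"
    using nn_integral_real_affine[of "\<lambda>x. ennreal (g x)" "-1" c] by simp
  also have "(\<integral>\<^sup>+x. ennreal (g x) \<partial>lborel) = ennreal (R powr (1-p) / (1-p))"
    unfolding g_def by (rule int_pow0[OF R p])
  finally show ?thesis using R p by (simp add: ennreal_plus[symmetric] del: ennreal_plus)
qed

lemma jp_negpow_le1: "q \<ge> 0 \<Longrightarrow> japan x powr (-q) \<le> 1"
  using powr_mono[of "-q" 0 "japan x"] japan_ge1[of x] by simp

lemma psiR_nonneg: "0 \<le> psiR \<epsilon> \<sigma> q a b"
  unfolding psiR_def by (intro mult_nonneg_nonneg add_nonneg_nonneg) simp_all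

lemma psi_pt:
  fixes \<epsilon> \<sigma> q a b :: real
  assumes eps: "0 < \<epsilon>" and q: "0 < q" and sig: "0 \<le> \<sigma>"
    and B: "1 < \<bar>b\<bar>" and a0: "a \<noteq> 0" and ab0: "a \<noteq> b" and ab: "\<bar>a\<bar> \<le> \<bar>b\<bar>"
  shows "psiR \<epsilon> \<sigma> q a b \<le>
     ((2*\<bar>b\<bar>) powr (-\<sigma>) + (2*\<bar>b\<bar>) powr (1+\<epsilon>-\<sigma>) * (\<bar>b\<bar>/2) powr (-q)) * \<bar>a\<bar> powr (-\<sigma>)
     + ((2*\<bar>b\<bar>) powr (1+\<epsilon>-\<sigma>) * (\<bar>b\<bar>/2) powr (-\<sigma>)) * \<bar>a - b\<bar> powr (-q)"
proof -
  define B where "B = \<bar>b\<bar>"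
  define X where "X = japan b powr (1+\<epsilon>)"
  define Y where "Y = japan (b - a) powr (-q)"
  define Z where "Z = japan (2*a*b) powr (-\<sigma>)"
  have Bpos: "0 < B" using B unfolding B_def by simp
  have apos: "0 < \<bar>a\<bar>" using a0 by simp
  have Xnn: "0 \<le> X" "0 \<le> Y" "0 \<le> Z" unfolding X_def Y_def Z_def by simp_all
  have psi_eq: "psiR \<epsilon> \<sigma> q a b = Z + X * Y * Z" unfolding psiR_def X_def Y_def Z_def by (simp add: algebra_simps)
  have "2 * B * \<bar>a\<bar> \<le> japan (2*a*b)"
    using japan_ge_abs[of "2*a*b"] unfolding B_def by (simp add: abs_mult mult_ac)
  hence "Z \<le> (2 * B * \<bar>a\<bar>) powr (-\<sigma>)" unfolding Z_def
    using Bpos apos sig by (intro powr_mono2') simp_all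
  also have "\<dots> = (2*B) powr (-\<sigma>) * \<bar>a\<bar> powr (-\<sigma>)" by (simp add: powr_mult)
  finally have Zb: "Z \<le> (2*B) powr (-\<sigma>) * \<bar>a\<bar> powr (-\<sigma>)" .
  have "japan b \<le> 2 * B" using japan_le[of b] B unfolding B_def by simp
  hence Xb: "X \<le> (2*B) powr (1+\<epsilon>)" unfolding X_def using eps japan_pos[of b] by (intro powr_mono2) simp_all
  have XZ: "X * Z \<le> (2*B) powr (1+\<epsilon>-\<sigma>) * \<bar>a\<bar> powr (-\<sigma>)"
  proof -
    have "X * Z \<le> (2*B) powr (1+\<epsilon>) * ((2*B) powr (-\<sigma>) * \<bar>a\<bar> powr (-\<sigma>))"
      using Xb Zb Xnn by (intro mult_mono) simp_all
    also have "\<dots> = (2*B) powr (1+\<epsilon>-\<sigma>) * \<bar>a\<bar> powr (-\<sigma>)"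
      by (simp add: powr_add[symmetric] mult.assoc[symmetric])
    finally show ?thesis .
  qed
  define A1 where "A1 = (2*B) powr (-\<sigma>) + (2*B) powr (1+\<epsilon>-\<sigma>) * (B/2) powr (-q)"
  define A2 where "A2 = (2*B) powr (1+\<epsilon>-\<sigma>) * (B/2) powr (-\<sigma>)"
  have Z1: "Z \<le> A1 * \<bar>a\<bar> powr (-\<sigma>)"
  proof -
    have "(2*B) powr (-\<sigma>) \<le> A1" unfolding A1_def by simp
    hence "(2*B) powr (-\<sigma>) * \<bar>a\<bar> powr (-\<sigma>) \<le> A1 * \<bar>a\<bar> powr (-\<sigma>)" by (rule mult_right_mono) simp
    with Zb show ?thesis by linarith
  qed
  have A2nn: "0 \<le> A2 * \<bar>a - b\<bar> powr (-q)" unfolding A2_def by simp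
  have "psiR \<epsilon> \<sigma> q a b \<le> A1 * \<bar>a\<bar> powr (-\<sigma>) + A2 * \<bar>a - b\<bar> powr (-q)"
  proof (cases "B/2 \<le> \<bar>b - a\<bar>")
    case True
    have "B/2 \<le> japan (b-a)" using True japan_ge_abs[of "b-a"] by linarith
    hence Yb: "Y \<le> (B/2) powr (-q)" unfolding Y_def using Bpos q by (intro powr_mono2') simp_all
    have "X * Y * Z = (X * Z) * Y" by (simp add: mult_ac)
    also have "\<dots> \<le> ((2*B) powr (1+\<epsilon>-\<sigma>) * \<bar>a\<bar> powr (-\<sigma>)) * (B/2) powr (-q)"
      by (rule mult_mono[OF XZ Yb]) (simp_all add: Xnn)
    finally have "Z + X * Y * Z \<le> (2*B) powr (-\<sigma>) * \<bar>a\<bar> powr (-\<sigma>) + ((2*B) powr (1+\<epsilon>-\<sigma>) * \<bar>a\<bar> powr (-\<sigma>)) * (B/2) powr (-q)"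
      using Zb by linarith
    also have "\<dots> = A1 * \<bar>a\<bar> powr (-\<sigma>)" unfolding A1_def by (simp add: algebra_simps)
    finally show ?thesis using psi_eq A2nn by linarith
  next
    case False
    have "\<bar>b\<bar> \<le> \<bar>a\<bar> + \<bar>b - a\<bar>" by linarith
    hence aB: "B/2 \<le> \<bar>a\<bar>" using False unfolding B_def by linarith
    have ap: "\<bar>a\<bar> powr (-\<sigma>) \<le> (B/2) powr (-\<sigma>)" using aB Bpos sig by (intro powr_mono2') simp_all
    have "\<bar>b - a\<bar> \<le> japan (b-a)" by (rule japan_ge_abs)
    hence Yb: "Y \<le> \<bar>a - b\<bar> powr (-q)" unfolding Y_def using ab0 q
      by (subst abs_minus_commute) (intro powr_mono2', simp_all)
    have "X * Y * Z = (X * Z) * Y" by (simp add: mult_ac)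
    also have "\<dots> \<le> ((2*B) powr (1+\<epsilon>-\<sigma>) * (B/2) powr (-\<sigma>)) * \<bar>a - b\<bar> powr (-q)"
    proof -
      have "X * Z \<le> (2*B) powr (1+\<epsilon>-\<sigma>) * (B/2) powr (-\<sigma>)"
        using XZ mult_left_mono[OF ap, of "(2*B) powr (1+\<epsilon>-\<sigma>)"] by simp
      thus ?thesis by (rule mult_mono[OF _ Yb]) (simp_all add: Xnn)
    qed
    finally have "X * Y * Z \<le> A2 * \<bar>a - b\<bar> powr (-q)" unfolding A2_def .
    thus ?thesis using psi_eq Z1 by linarith
  qed
  thus ?thesis unfolding A1_def A2_def B_def .
qed

lemma pw: "0 < (x::real) \<Longrightarrow> x powr r = exp (r * ln x)"
  unfolding powr_def by (simp add: mult.commute)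

lemma psi_const:
  fixes \<epsilon> \<sigma> q B :: real
  assumes eps: "0 < \<epsilon>" "\<epsilon> \<le> 1" and q: "0 < q" "q < 1" and sig: "1/2 \<le> \<sigma>" "\<sigma> < 1"
    and key: "2 + \<epsilon> - 2*\<sigma> - q \<le> 0" and B: "1 < B"
  shows "((2*B) powr (-\<sigma>) + (2*B) powr (1+\<epsilon>-\<sigma>) * (B/2) powr (-q)) * B powr (1-\<sigma>) \<le> 1 + exp (3 * ln 2)"
    and "((2*B) powr (1+\<epsilon>-\<sigma>) * (B/2) powr (-\<sigma>)) * (2*B) powr (1-q) \<le> exp (3 * ln 2)"
proof -
  define l where "l = ln B"
  define t where "t = ln (2::real)"
  have l0: "0 \<le> l" using B unfolding l_def by simp
  have t0: "0 \<le> t" unfolding t_def by simp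
  have l2B: "ln (2*B) = t + l" using B unfolding t_def l_def by (simp add: ln_mult)
  have lB2: "ln (B/2) = l - t" using B unfolding t_def l_def by (simp add: ln_div)
  have Bp: "0 < B" "0 < 2*B" "0 < B/2" using B by simp_all
  have n1: "(1 - 2*\<sigma>) * l \<le> 0" using sig l0 by (intro mult_nonpos_nonneg) simp_all
  have n2: "(2 + \<epsilon> - 2*\<sigma> - q) * l \<le> 0" using key l0 by (intro mult_nonpos_nonneg) simp_all
  have n3: "\<sigma> * t \<ge> 0" using sig t0 by simp
  have n4: "(1 + \<epsilon> - \<sigma> + q) * t \<le> 3 * t" using eps q sig t0 by (intro mult_right_mono) simp_all
  have n5: "(2 + \<epsilon> - q) * t \<le> 3 * t" using eps q t0 by (intro mult_right_mono) simp_all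
  have "((2*B) powr (-\<sigma>) + (2*B) powr (1+\<epsilon>-\<sigma>) * (B/2) powr (-q)) * B powr (1-\<sigma>)
      = exp (-\<sigma> * (t + l) + (1-\<sigma>) * l) + exp ((1+\<epsilon>-\<sigma>) * (t + l) + (-q) * (l - t) + (1-\<sigma>) * l)"
    unfolding pw[OF Bp(1)] pw[OF Bp(2)] pw[OF Bp(3)] l2B lB2 l_def[symmetric]
    by (simp add: distrib_right mult_exp_exp)
  also have "\<dots> \<le> exp 0 + exp (3 * t)"
  proof (intro add_mono)
    show "exp (-\<sigma> * (t + l) + (1-\<sigma>) * l) \<le> exp 0"
      using n1 n3 by (simp add: ring_distribs)
    show "exp ((1+\<epsilon>-\<sigma>) * (t + l) + (-q) * (l - t) + (1-\<sigma>) * l) \<le> exp (3 * t)"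
    proof -
      have "(1+\<epsilon>-\<sigma>) * (t + l) + (-q) * (l - t) + (1-\<sigma>) * l = (1 + \<epsilon> - \<sigma> + q) * t + (2 + \<epsilon> - 2*\<sigma> - q) * l"
        by (simp add: algebra_simps)
      thus ?thesis using n2 n4 by simp
    qed
  qed
  finally show "((2*B) powr (-\<sigma>) + (2*B) powr (1+\<epsilon>-\<sigma>) * (B/2) powr (-q)) * B powr (1-\<sigma>) \<le> 1 + exp (3 * ln 2)"
    unfolding t_def by simp
  have "((2*B) powr (1+\<epsilon>-\<sigma>) * (B/2) powr (-\<sigma>)) * (2*B) powr (1-q)
      = exp ((1+\<epsilon>-\<sigma>) * (t + l) + (-\<sigma>) * (l - t) + (1-q) * (t + l))"
    unfolding pw[OF Bp(2)] pw[OF Bp(3)] l2B lB2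
    by (simp add: mult_exp_exp)
  also have "(1+\<epsilon>-\<sigma>) * (t + l) + (-\<sigma>) * (l - t) + (1-q) * (t + l) = (2 + \<epsilon> - q) * t + (2 + \<epsilon> - 2*\<sigma> - q) * l"
    by (simp add: algebra_simps)
  also have "exp \<dots> \<le> exp (3 * t)" using n2 n5 by simp
  finally show "((2*B) powr (1+\<epsilon>-\<sigma>) * (B/2) powr (-\<sigma>)) * (2*B) powr (1-q) \<le> exp (3 * ln 2)"
    unfolding t_def .
qed


lemma psi_int:
  fixes \<epsilon> \<sigma> q b :: real
  assumes eps: "0 < \<epsilon>" "\<epsilon> \<le> 1" and q: "0 < q" "q < 1" and sig: "1/2 \<le> \<sigma>" "\<sigma> < 1"
    and key: "2 + \<epsilon> - 2*\<sigma> - q \<le> 0"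
  shows "(\<integral>\<^sup>+a. ennreal (psiR \<epsilon> \<sigma> q a b * (if \<bar>a\<bar> \<le> \<bar>b\<bar> then 1 else 0)) \<partial>lborel)
     \<le> ennreal (10 + 2 * (1 + exp (3 * ln 2)) / (1-\<sigma>) + 2 * exp (3 * ln 2) / (1-q))"
proof (cases "\<bar>b\<bar> \<le> 1")
  case True
  have pt: "ennreal (psiR \<epsilon> \<sigma> q a b * (if \<bar>a\<bar> \<le> \<bar>b\<bar> then 1 else 0)) \<le> ennreal 5 * indicator {-1..1} a" for a
  proof (cases "\<bar>a\<bar> \<le> \<bar>b\<bar>")
    case True2: True
    have "japan b \<le> 2" using japan_le[of b] True by simp
    hence "japan b powr (1+\<epsilon>) \<le> 2 powr (1+\<epsilon>)" using eps japan_pos[of b] by (intro powr_mono2) simp_all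
    also have "\<dots> \<le> 2 powr 2" using eps by (intro powr_mono) simp_all
    finally have X: "japan b powr (1+\<epsilon>) \<le> 4" by simp
    have Y: "japan (b-a) powr (-q) \<le> 1" using q by (intro jp_negpow_le1) simp
    have Z: "japan (2*a*b) powr (-\<sigma>) \<le> 1" using sig by (intro jp_negpow_le1) simp
    have "japan b powr (1+\<epsilon>) * japan (b-a) powr (-q) \<le> 4 * 1"
      using X Y by (intro mult_mono) simp_all
    hence "psiR \<epsilon> \<sigma> q a b \<le> 5 * 1" unfolding psiR_def
      using Z by (intro mult_mono) simp_all
    moreover have "a \<in> {-1..1}" using True True2 by auto
    ultimately show ?thesis using True2 by (simp add: ennreal_leI[of _ 5, simplified])
  qed (simp add: indicator_def)
  have "(\<integral>\<^sup>+a. ennreal (psiR \<epsilon> \<sigma> q a b * (if \<bar>a\<bar> \<le> \<bar>b\<bar> then 1 else 0)) \<partial>lborel)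
      \<le> (\<integral>\<^sup>+a. ennreal 5 * indicator {-1..1::real} a \<partial>lborel)"
    using pt by (auto intro!: nn_integral_mono)
  also have "\<dots> = ennreal 5 * 2" by (simp add: nn_integral_cmult_indicator)
  also have "\<dots> = ennreal 10" by (simp flip: ennreal_mult)
  also have "\<dots> \<le> ennreal (10 + 2 * (1 + exp (3 * ln 2)) / (1-\<sigma>) + 2 * exp (3 * ln 2) / (1-q))"
    using sig q by (intro ennreal_leI) (simp add: add_nonneg_nonneg)
  finally show ?thesis .
next
  case False
  define B where "B = \<bar>b\<bar>"
  have B1: "1 < B" using False unfolding B_def by simp
  define A1 where "A1 = (2*B) powr (-\<sigma>) + (2*B) powr (1+\<epsilon>-\<sigma>) * (B/2) powr (-q)"
  define A2 where "A2 = (2*B) powr (1+\<epsilon>-\<sigma>) * (B/2) powr (-\<sigma>)"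
  have A1nn: "0 \<le> A1" and A2nn: "0 \<le> A2" unfolding A1_def A2_def by simp_all
  have AE: "AE a in lborel. a \<noteq> 0 \<and> a \<noteq> b"
    using AE_lborel_singleton[of 0] AE_lborel_singleton[of b] by eventually_elim simp
  have "(\<integral>\<^sup>+a. ennreal (psiR \<epsilon> \<sigma> q a b * (if \<bar>a\<bar> \<le> \<bar>b\<bar> then 1 else 0)) \<partial>lborel)
      \<le> (\<integral>\<^sup>+a. ennreal A1 * ennreal (Hk 0 B \<sigma> a) + ennreal A2 * ennreal (Hk b (2*B) q a) \<partial>lborel)"
  proof (rule nn_integral_mono_AE)
    show "AE a in lborel. ennreal (psiR \<epsilon> \<sigma> q a b * (if \<bar>a\<bar> \<le> \<bar>b\<bar> then 1 else 0))
        \<le> ennreal A1 * ennreal (Hk 0 B \<sigma> a) + ennreal A2 * ennreal (Hk b (2*B) q a)"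
      using AE
    proof eventually_elim
      case (elim a)
      show ?case
      proof (cases "\<bar>a\<bar> \<le> \<bar>b\<bar>")
        case True
        have h1: "Hk 0 B \<sigma> a = \<bar>a\<bar> powr (-\<sigma>)" using True unfolding Hk_def B_def by simp
        have "\<bar>a - b\<bar> \<le> 2 * B" using True unfolding B_def by linarith
        hence h2: "Hk b (2*B) q a = \<bar>a - b\<bar> powr (-q)" unfolding Hk_def by simp
        have "psiR \<epsilon> \<sigma> q a b \<le> A1 * \<bar>a\<bar> powr (-\<sigma>) + A2 * \<bar>a - b\<bar> powr (-q)"
          unfolding A1_def A2_def B_def
          using psi_pt[of \<epsilon> q \<sigma> b a] eps q sig False elim True by simp
        hence "ennreal (psiR \<epsilon> \<sigma> q a b) \<le> ennreal (A1 * \<bar>a\<bar> powr (-\<sigma>) + A2 * \<bar>a - b\<bar> powr (-q))"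
          by (rule ennreal_leI)
        also have "\<dots> = ennreal A1 * ennreal (Hk 0 B \<sigma> a) + ennreal A2 * ennreal (Hk b (2*B) q a)"
          unfolding h1 h2 using A1nn A2nn by (simp add: ennreal_plus ennreal_mult)
        finally show ?thesis using True by simp
      qed simp
    qed
  qed
  also have "\<dots> = ennreal A1 * (\<integral>\<^sup>+a. ennreal (Hk 0 B \<sigma> a) \<partial>lborel) + ennreal A2 * (\<integral>\<^sup>+a. ennreal (Hk b (2*B) q a) \<partial>lborel)"
    by (simp add: nn_integral_add nn_integral_cmult)
  also have "\<dots> = ennreal A1 * ennreal (2 * (B powr (1-\<sigma>) / (1-\<sigma>))) + ennreal A2 * ennreal (2 * ((2*B) powr (1-q) / (1-q)))"
    using B1 sig q by (simp add: int_Hk)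
  also have "\<dots> = ennreal (2 * (A1 * B powr (1-\<sigma>)) / (1-\<sigma>) + 2 * (A2 * (2*B) powr (1-q)) / (1-q))"
    using A1nn A2nn sig q by (simp add: ennreal_plus[symmetric] ennreal_mult[symmetric] del: ennreal_plus) (simp add: mult_ac)
  also have "\<dots> \<le> ennreal (10 + 2 * (1 + exp (3 * ln 2)) / (1-\<sigma>) + 2 * exp (3 * ln 2) / (1-q))"
  proof (intro ennreal_leI)
    have c1: "A1 * B powr (1-\<sigma>) \<le> 1 + exp (3 * ln 2)" unfolding A1_def by (rule psi_const(1)[OF eps q sig key B1])
    have c2: "A2 * (2*B) powr (1-q) \<le> exp (3 * ln 2)" unfolding A2_def by (rule psi_const(2)[OF eps q sig key B1])
    have "2 * (A1 * B powr (1-\<sigma>)) / (1-\<sigma>) \<le> 2 * (1 + exp (3 * ln 2)) / (1-\<sigma>)"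
      using c1 sig by (intro divide_right_mono) simp_all
    moreover have "2 * (A2 * (2*B) powr (1-q)) / (1-q) \<le> 2 * exp (3 * ln 2) / (1-q)"
      using c2 q by (intro divide_right_mono) simp_all
    ultimately show "2 * (A1 * B powr (1-\<sigma>)) / (1-\<sigma>) + 2 * (A2 * (2*B) powr (1-q)) / (1-q)
        \<le> 10 + 2 * (1 + exp (3 * ln 2)) / (1-\<sigma>) + 2 * exp (3 * ln 2) / (1-q)" by linarith
  qed
  finally show ?thesis .
qed

lemma wCS:
  fixes w u v :: "'a \<Rightarrow> ennreal"
  assumes [measurable]: "w \<in> borel_measurable M" "u \<in> borel_measurable M" "v \<in> borel_measurable M"
  shows "(\<integral>\<^sup>+x. w x * (u x * v x) \<partial>M)\<^sup>2 \<le> (\<integral>\<^sup>+x. w x * (u x)\<^sup>2 \<partial>M) * (\<integral>\<^sup>+x. w x * (v x)\<^sup>2 \<partial>M)"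
proof -
  have m: "u \<in> borel_measurable (density M w)" "v \<in> borel_measurable (density M w)" by simp_all
  have "(\<integral>\<^sup>+x. u x * v x \<partial>density M w)\<^sup>2 \<le> (\<integral>\<^sup>+x. u x ^ 2 \<partial>density M w) * (\<integral>\<^sup>+x. v x ^ 2 \<partial>density M w)"
    by (rule Cauchy_Schwarz_nn_integral[OF m])
  thus ?thesis by (simp add: nn_integral_density)
qed

lemma schur:
  fixes k :: "real \<times> real \<times> real \<Rightarrow> ennreal" and G1 G2 G3 :: "real \<Rightarrow> ennreal"
  assumes km[measurable]: "k \<in> borel_measurable borel"
    and Gm[measurable]: "G1 \<in> borel_measurable borel" "G2 \<in> borel_measurable borel" "G3 \<in> borel_measurable borel"
    and S1: "\<And>\<xi> \<xi>3. (\<integral>\<^sup>+\<xi>1. k (\<xi>, \<xi>1, \<xi>3) \<partial>lborel) \<le> S"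
    and S2: "\<And>\<xi>1 \<xi>2. (\<integral>\<^sup>+\<xi>. k (\<xi>, \<xi>1, \<xi> - \<xi>1 - \<xi>2) \<partial>lborel) \<le> S"
  shows "(\<integral>\<^sup>+\<xi>. (\<integral>\<^sup>+p. k (\<xi>, fst p, snd p) * G1 (fst p) * G2 (\<xi> - fst p - snd p) * G3 (snd p) \<partial>(lborel \<Otimes>\<^sub>M lborel))\<^sup>2 \<partial>lborel)
    \<le> S\<^sup>2 * (\<integral>\<^sup>+x. (G1 x)\<^sup>2 \<partial>lborel) * (\<integral>\<^sup>+x. (G2 x)\<^sup>2 \<partial>lborel) * (\<integral>\<^sup>+x. (G3 x)\<^sup>2 \<partial>lborel)"
proof -
  define N1 where "N1 = (\<integral>\<^sup>+x. (G1 x)\<^sup>2 \<partial>lborel)"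
  define N2 where "N2 = (\<integral>\<^sup>+x. (G2 x)\<^sup>2 \<partial>lborel)"
  define N3 where "N3 = (\<integral>\<^sup>+x. (G3 x)\<^sup>2 \<partial>lborel)"
  define A where "A = (\<lambda>\<xi>. \<integral>\<^sup>+p. k (\<xi>, fst p, snd p) * (G3 (snd p))\<^sup>2 \<partial>(lborel \<Otimes>\<^sub>M lborel))"
  define B where "B = (\<lambda>\<xi>. \<integral>\<^sup>+p. k (\<xi>, fst p, snd p) * (G1 (fst p) * G2 (\<xi> - fst p - snd p))\<^sup>2 \<partial>(lborel \<Otimes>\<^sub>M lborel))"
  have pt: "(\<integral>\<^sup>+p. k (\<xi>, fst p, snd p) * G1 (fst p) * G2 (\<xi> - fst p - snd p) * G3 (snd p) \<partial>(lborel \<Otimes>\<^sub>M lborel))\<^sup>2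
      \<le> A \<xi> * B \<xi>" for \<xi>
  proof -
    have "(\<integral>\<^sup>+p. k (\<xi>, fst p, snd p) * G1 (fst p) * G2 (\<xi> - fst p - snd p) * G3 (snd p) \<partial>(lborel \<Otimes>\<^sub>M lborel))
       = (\<integral>\<^sup>+p. k (\<xi>, fst p, snd p) * (G3 (snd p) * (G1 (fst p) * G2 (\<xi> - fst p - snd p))) \<partial>(lborel \<Otimes>\<^sub>M lborel))"
      by (simp add: mult_ac)
    also have "(\<dots>)\<^sup>2 \<le> A \<xi> * B \<xi>" unfolding A_def B_def by (rule wCS) measurable
    finally show ?thesis .
  qed
  have Ab: "A \<xi> \<le> S * N3" for \<xi>
  proof -
    have "A \<xi> = (\<integral>\<^sup>+\<xi>3. (\<integral>\<^sup>+\<xi>1. k (\<xi>, \<xi>1, \<xi>3) * (G3 \<xi>3)\<^sup>2 \<partial>lborel) \<partial>lborel)"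
    proof -
      have m: "(\<lambda>p. k (\<xi>, fst p, snd p) * (G3 (snd p))\<^sup>2) \<in> borel_measurable (lborel \<Otimes>\<^sub>M lborel)" by measurable
      show ?thesis unfolding A_def using lborel_pair.nn_integral_snd[OF m] by simp
    qed
    also have "\<dots> = (\<integral>\<^sup>+\<xi>3. (\<integral>\<^sup>+\<xi>1. k (\<xi>, \<xi>1, \<xi>3) \<partial>lborel) * (G3 \<xi>3)\<^sup>2 \<partial>lborel)"
      by (intro nn_integral_cong nn_integral_multc) measurable
    also have "\<dots> \<le> (\<integral>\<^sup>+\<xi>3. S * (G3 \<xi>3)\<^sup>2 \<partial>lborel)"
      by (intro nn_integral_mono mult_right_mono S1) simp
    also have "\<dots> = S * N3" unfolding N3_def by (rule nn_integral_cmult) measurable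
    finally show ?thesis .
  qed
  have Bint: "(\<integral>\<^sup>+\<xi>. B \<xi> \<partial>lborel) \<le> S * N1 * N2"
  proof -
    have "(\<integral>\<^sup>+\<xi>. B \<xi> \<partial>lborel) = (\<integral>\<^sup>+\<xi>. (\<integral>\<^sup>+\<xi>1. (\<integral>\<^sup>+\<xi>3. k (\<xi>, \<xi>1, \<xi>3) * (G1 \<xi>1)\<^sup>2 * (G2 (\<xi> - \<xi>1 - \<xi>3))\<^sup>2 \<partial>lborel) \<partial>lborel) \<partial>lborel)"
    proof (intro nn_integral_cong)
      fix \<xi>
      have m: "(\<lambda>p. k (\<xi>, fst p, snd p) * (G1 (fst p) * G2 (\<xi> - fst p - snd p))\<^sup>2) \<in> borel_measurable (lborel \<Otimes>\<^sub>M lborel)" by measurable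
      show "B \<xi> = (\<integral>\<^sup>+\<xi>1. (\<integral>\<^sup>+\<xi>3. k (\<xi>, \<xi>1, \<xi>3) * (G1 \<xi>1)\<^sup>2 * (G2 (\<xi> - \<xi>1 - \<xi>3))\<^sup>2 \<partial>lborel) \<partial>lborel)"
        unfolding B_def using lborel.nn_integral_fst[OF m] by (simp add: power_mult_distrib mult_ac)
    qed
    also have "\<dots> = (\<integral>\<^sup>+\<xi>1. (\<integral>\<^sup>+\<xi>. (\<integral>\<^sup>+\<xi>3. k (\<xi>, \<xi>1, \<xi>3) * (G1 \<xi>1)\<^sup>2 * (G2 (\<xi> - \<xi>1 - \<xi>3))\<^sup>2 \<partial>lborel) \<partial>lborel) \<partial>lborel)"
      by (rule lborel_pair.Fubini') measurable
    also have "\<dots> = (\<integral>\<^sup>+\<xi>1. (\<integral>\<^sup>+\<xi>. (\<integral>\<^sup>+\<xi>2. k (\<xi>, \<xi>1, \<xi> - \<xi>1 - \<xi>2) * (G1 \<xi>1)\<^sup>2 * (G2 \<xi>2)\<^sup>2 \<partial>lborel) \<partial>lborel) \<partial>lborel)"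
    proof (rule nn_integral_cong, rule nn_integral_cong)
      fix \<xi>1 \<xi>
      show "(\<integral>\<^sup>+\<xi>3. k (\<xi>, \<xi>1, \<xi>3) * (G1 \<xi>1)\<^sup>2 * (G2 (\<xi> - \<xi>1 - \<xi>3))\<^sup>2 \<partial>lborel)
          = (\<integral>\<^sup>+\<xi>2. k (\<xi>, \<xi>1, \<xi> - \<xi>1 - \<xi>2) * (G1 \<xi>1)\<^sup>2 * (G2 \<xi>2)\<^sup>2 \<partial>lborel)"
        using nn_integral_real_affine[of "\<lambda>\<xi>3. k (\<xi>, \<xi>1, \<xi>3) * (G1 \<xi>1)\<^sup>2 * (G2 (\<xi> - \<xi>1 - \<xi>3))\<^sup>2" "-1" "\<xi> - \<xi>1"]
        by simp
    qed
    also have "\<dots> = (\<integral>\<^sup>+\<xi>1. (\<integral>\<^sup>+\<xi>2. (\<integral>\<^sup>+\<xi>. k (\<xi>, \<xi>1, \<xi> - \<xi>1 - \<xi>2) * (G1 \<xi>1)\<^sup>2 * (G2 \<xi>2)\<^sup>2 \<partial>lborel) \<partial>lborel) \<partial>lborel)"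
      by (intro nn_integral_cong lborel_pair.Fubini') measurable
    also have "\<dots> = (\<integral>\<^sup>+\<xi>1. (\<integral>\<^sup>+\<xi>2. (\<integral>\<^sup>+\<xi>. k (\<xi>, \<xi>1, \<xi> - \<xi>1 - \<xi>2) \<partial>lborel) * ((G1 \<xi>1)\<^sup>2 * (G2 \<xi>2)\<^sup>2) \<partial>lborel) \<partial>lborel)"
      by (intro nn_integral_cong) (simp add: mult.assoc nn_integral_multc)
    also have "\<dots> \<le> (\<integral>\<^sup>+\<xi>1. (\<integral>\<^sup>+\<xi>2. S * ((G1 \<xi>1)\<^sup>2 * (G2 \<xi>2)\<^sup>2) \<partial>lborel) \<partial>lborel)"
      by (intro nn_integral_mono mult_right_mono S2) simp
    also have "\<dots> = (\<integral>\<^sup>+\<xi>1. S * (G1 \<xi>1)\<^sup>2 * N2 \<partial>lborel)"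
      unfolding N2_def by (intro nn_integral_cong) (simp add: nn_integral_cmult mult.assoc[symmetric])
    also have "\<dots> = S * N1 * N2"
      unfolding N1_def by (simp add: nn_integral_cmult nn_integral_multc mult.assoc[symmetric])
    finally show ?thesis .
  qed
  have "(\<integral>\<^sup>+\<xi>. (\<integral>\<^sup>+p. k (\<xi>, fst p, snd p) * G1 (fst p) * G2 (\<xi> - fst p - snd p) * G3 (snd p) \<partial>(lborel \<Otimes>\<^sub>M lborel))\<^sup>2 \<partial>lborel)
      \<le> (\<integral>\<^sup>+\<xi>. (S * N3) * B \<xi> \<partial>lborel)"
    by (intro nn_integral_mono order_trans[OF pt] mult_right_mono Ab) simp
  also have "\<dots> = (S * N3) * (\<integral>\<^sup>+\<xi>. B \<xi> \<partial>lborel)"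
    unfolding B_def by (rule nn_integral_cmult) measurable
  also have "\<dots> \<le> (S * N3) * (S * N1 * N2)" by (intro mult_left_mono Bint) simp
  also have "\<dots> = S\<^sup>2 * N1 * N2 * N3" by (simp add: power2_eq_square mult_ac)
  finally show ?thesis unfolding N1_def N2_def N3_def .
qed

definition kA :: "real \<Rightarrow> real \<Rightarrow> real \<Rightarrow> real \<times> real \<times> real \<Rightarrow> ennreal" where
  "kA s \<epsilon> \<sigma> x = ennreal (K0 s \<epsilon> \<sigma> (fst x) (fst (snd x)) (snd (snd x)) *
      (if \<bar>fst x - fst (snd x)\<bar> \<le> \<bar>fst x - snd (snd x)\<bar> then 1 else 0))"

lemma K0_meas[measurable]: "(\<lambda>x. K0 s \<epsilon> \<sigma> (f x) (g x) (h x)) \<in> borel_measurable M"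
  if [measurable]: "f \<in> borel_measurable M" "g \<in> borel_measurable M" "h \<in> borel_measurable M"
  unfolding K0_def by measurable

lemma kA_meas[measurable]: "kA s \<epsilon> \<sigma> \<in> borel_measurable borel"
proof -
  have "kA s \<epsilon> \<sigma> \<in> borel_measurable (borel \<Otimes>\<^sub>M (borel \<Otimes>\<^sub>M borel))"
    unfolding kA_def by measurable
  thus ?thesis by (simp only: borel_prod)
qed

lemma K0_nonneg: "0 \<le> K0 s \<epsilon> \<sigma> \<xi> \<xi>1 \<xi>3"
  unfolding K0_def by simp

lemma K0_sym: "K0 s \<epsilon> \<sigma> \<xi> \<xi>1 \<xi>3 = K0 s \<epsilon> \<sigma> \<xi> \<xi>3 \<xi>1"
  unfolding K0_def by (simp add: algebra_simps)

lemma K0_split: "ennreal (K0 s \<epsilon> \<sigma> \<xi> \<xi>1 \<xi>3) \<le> kA s \<epsilon> \<sigma> (\<xi>, \<xi>1, \<xi>3) + kA s \<epsilon> \<sigma> (\<xi>, \<xi>3, \<xi>1)"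
  unfolding kA_def using K0_sym[of s \<epsilon> \<sigma> \<xi> \<xi>1 \<xi>3] by (cases "\<bar>\<xi>-\<xi>1\<bar> \<le> \<bar>\<xi>-\<xi>3\<bar>") auto

locale params =
  fixes s \<epsilon> \<sigma> q :: real
  assumes s_gt: "1/2 < s" and eps_pos: "0 < \<epsilon>" and eps_le: "\<epsilon> \<le> 1" and eps_lt: "1 + \<epsilon> < 2 * min s 1"
    and q_pos: "0 < q" and q_le: "q \<le> min s 1" and q_lt: "q < 1"
    and sig_ge: "1/2 \<le> \<sigma>" and sig_lt: "\<sigma> < 1" and key: "2 + \<epsilon> - 2*\<sigma> - q \<le> 0"
begin

definition "C0 = exp ((3 * s + 3) * ln 5)"
definition "CJ = 10 + 2 * (1 + exp (3 * ln 2)) / (1-\<sigma>) + 2 * exp (3 * ln 2) / (1-q)"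

definition "psiE a b = ennreal (psiR \<epsilon> \<sigma> q a b * (if \<bar>a\<bar> \<le> \<bar>b\<bar> then 1 else 0))"

lemma psiE_meas[measurable]: "(\<lambda>x. psiE (f x) (g x)) \<in> borel_measurable M"
  if [measurable]: "f \<in> borel_measurable M" "g \<in> borel_measurable M"
  unfolding psiE_def psiR_def by measurable

lemma C0_pos: "0 < C0" unfolding C0_def by simp
lemma CJ_pos: "0 < CJ" unfolding CJ_def using sig_lt q_lt by (simp add: add_pos_nonneg)

lemma kA_le: "kA s \<epsilon> \<sigma> (\<xi>, \<xi>1, \<xi>3) \<le> ennreal C0 * psiE (\<xi>-\<xi>1) (\<xi>-\<xi>3)"
proof (cases "\<bar>\<xi>-\<xi>1\<bar> \<le> \<bar>\<xi>-\<xi>3\<bar>")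
  case True
  have "K0 s \<epsilon> \<sigma> \<xi> \<xi>1 \<xi>3 \<le> C0 * psiR \<epsilon> \<sigma> q (\<xi>-\<xi>1) (\<xi>-\<xi>3)"
    unfolding C0_def using sig_ge by (intro kernel_bound s_gt eps_pos eps_lt q_pos q_le True) simp
  thus ?thesis unfolding kA_def psiE_def using True C0_pos psiR_nonneg
    by (simp add: ennreal_mult[symmetric] ennreal_leI)
qed (simp add: kA_def)

lemma psiE_int: "(\<integral>\<^sup>+a. psiE a b \<partial>lborel) \<le> ennreal CJ"
  unfolding psiE_def CJ_def by (rule psi_int[OF eps_pos eps_le q_pos q_lt sig_ge sig_lt key])

lemma S1: "(\<integral>\<^sup>+\<xi>1. kA s \<epsilon> \<sigma> (\<xi>, \<xi>1, \<xi>3) \<partial>lborel) \<le> ennreal (C0 * CJ)"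
proof -
  have "(\<integral>\<^sup>+\<xi>1. kA s \<epsilon> \<sigma> (\<xi>, \<xi>1, \<xi>3) \<partial>lborel) \<le> (\<integral>\<^sup>+\<xi>1. ennreal C0 * psiE (\<xi>-\<xi>1) (\<xi>-\<xi>3) \<partial>lborel)"
    by (rule nn_integral_mono) (rule kA_le)
  also have "\<dots> = ennreal C0 * (\<integral>\<^sup>+\<xi>1. psiE (\<xi>-\<xi>1) (\<xi>-\<xi>3) \<partial>lborel)"
    by (rule nn_integral_cmult) measurable
  also have "(\<integral>\<^sup>+\<xi>1. psiE (\<xi>-\<xi>1) (\<xi>-\<xi>3) \<partial>lborel) = (\<integral>\<^sup>+a. psiE a (\<xi>-\<xi>3) \<partial>lborel)"
    using nn_integral_real_affine[of "\<lambda>a. psiE a (\<xi>-\<xi>3)" "-1" \<xi>] by simp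
  also have "ennreal C0 * \<dots> \<le> ennreal C0 * ennreal CJ" by (intro mult_left_mono psiE_int) simp
  finally show ?thesis using C0_pos CJ_pos by (simp add: ennreal_mult)
qed

lemma S2: "(\<integral>\<^sup>+\<xi>. kA s \<epsilon> \<sigma> (\<xi>, \<xi>1, \<xi> - \<xi>1 - \<xi>2) \<partial>lborel) \<le> ennreal (C0 * CJ)"
proof -
  have "(\<integral>\<^sup>+\<xi>. kA s \<epsilon> \<sigma> (\<xi>, \<xi>1, \<xi> - \<xi>1 - \<xi>2) \<partial>lborel) \<le> (\<integral>\<^sup>+\<xi>. ennreal C0 * psiE (\<xi>-\<xi>1) (\<xi>1+\<xi>2) \<partial>lborel)"
    by (rule nn_integral_mono) (rule order_trans[OF kA_le], simp)
  also have "\<dots> = ennreal C0 * (\<integral>\<^sup>+\<xi>. psiE (\<xi>-\<xi>1) (\<xi>1+\<xi>2) \<partial>lborel)"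
    by (rule nn_integral_cmult) measurable
  also have "(\<integral>\<^sup>+\<xi>. psiE (\<xi>-\<xi>1) (\<xi>1+\<xi>2) \<partial>lborel) = (\<integral>\<^sup>+a. psiE a (\<xi>1+\<xi>2) \<partial>lborel)"
    using nn_integral_real_affine[of "\<lambda>a. psiE a (\<xi>1+\<xi>2)" 1 "-\<xi>1"] by simp
  also have "ennreal C0 * \<dots> \<le> ennreal C0 * ennreal CJ" by (intro mult_left_mono psiE_int) simp
  finally show ?thesis using C0_pos CJ_pos by (simp add: ennreal_mult)
qed

end

lemma pair_swap:
  fixes g :: "real \<times> real \<Rightarrow> ennreal"
  assumes [measurable]: "g \<in> borel_measurable (lborel \<Otimes>\<^sub>M lborel)"
  shows "(\<integral>\<^sup>+p. g (snd p, fst p) \<partial>(lborel \<Otimes>\<^sub>M lborel)) = (\<integral>\<^sup>+p. g p \<partial>(lborel \<Otimes>\<^sub>M lborel))"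
proof -
  have m: "(\<lambda>p. g (snd p, fst p)) \<in> borel_measurable (lborel \<Otimes>\<^sub>M lborel)" by measurable
  have "(\<integral>\<^sup>+p. g (snd p, fst p) \<partial>(lborel \<Otimes>\<^sub>M lborel)) = (\<integral>\<^sup>+y. (\<integral>\<^sup>+x. g (y, x) \<partial>lborel) \<partial>lborel)"
    using lborel_pair.nn_integral_snd[OF m] by simp
  also have "\<dots> = (\<integral>\<^sup>+p. g p \<partial>(lborel \<Otimes>\<^sub>M lborel))"
    by (rule lborel.nn_integral_fst) simp
  finally show ?thesis .
qed

lemma sq_sum_le: "((a::ennreal) + b)\<^sup>2 \<le> 2 * a\<^sup>2 + 2 * b\<^sup>2"
proof -
  have "(a + b)\<^sup>2 = a\<^sup>2 + b\<^sup>2 + 2 * a * b" by (rule power2_sum)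
  also have "\<dots> \<le> a\<^sup>2 + b\<^sup>2 + (a\<^sup>2 + b\<^sup>2)" by (intro add_left_mono sum_of_squares_ge_ennreal)
  also have "\<dots> = 2 * a\<^sup>2 + 2 * b\<^sup>2" by (simp add: mult_2 algebra_simps)
  finally show ?thesis .
qed

context params
begin

lemma main_bound:
  fixes G1 G2 G3 :: "real \<Rightarrow> ennreal"
  assumes Gm[measurable]: "G1 \<in> borel_measurable borel" "G2 \<in> borel_measurable borel" "G3 \<in> borel_measurable borel"
  shows "(\<integral>\<^sup>+\<xi>. (\<integral>\<^sup>+p. ennreal (K0 s \<epsilon> \<sigma> \<xi> (fst p) (snd p)) * G1 (fst p) * G2 (\<xi> - fst p - snd p) * G3 (snd p) \<partial>(lborel \<Otimes>\<^sub>M lborel))\<^sup>2 \<partial>lborel)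
    \<le> 4 * (ennreal (C0 * CJ))\<^sup>2 * (\<integral>\<^sup>+x. (G1 x)\<^sup>2 \<partial>lborel) * (\<integral>\<^sup>+x. (G2 x)\<^sup>2 \<partial>lborel) * (\<integral>\<^sup>+x. (G3 x)\<^sup>2 \<partial>lborel)"
proof -
  define S where "S = ennreal (C0 * CJ)"
  define N1 where "N1 = (\<integral>\<^sup>+x. (G1 x)\<^sup>2 \<partial>lborel)"
  define N2 where "N2 = (\<integral>\<^sup>+x. (G2 x)\<^sup>2 \<partial>lborel)"
  define N3 where "N3 = (\<integral>\<^sup>+x. (G3 x)\<^sup>2 \<partial>lborel)"
  define FA where "FA = (\<lambda>\<xi>. \<integral>\<^sup>+p. kA s \<epsilon> \<sigma> (\<xi>, fst p, snd p) * G1 (fst p) * G2 (\<xi> - fst p - snd p) * G3 (snd p) \<partial>(lborel \<Otimes>\<^sub>M lborel))"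
  define FB where "FB = (\<lambda>\<xi>. \<integral>\<^sup>+p. kA s \<epsilon> \<sigma> (\<xi>, fst p, snd p) * G3 (fst p) * G2 (\<xi> - fst p - snd p) * G1 (snd p) \<partial>(lborel \<Otimes>\<^sub>M lborel))"
  have FAm[measurable]: "FA \<in> borel_measurable lborel" unfolding FA_def by measurable
  have FBm[measurable]: "FB \<in> borel_measurable lborel" unfolding FB_def by measurable
  have pt: "(\<integral>\<^sup>+p. ennreal (K0 s \<epsilon> \<sigma> \<xi> (fst p) (snd p)) * G1 (fst p) * G2 (\<xi> - fst p - snd p) * G3 (snd p) \<partial>(lborel \<Otimes>\<^sub>M lborel))
      \<le> FA \<xi> + FB \<xi>" for \<xi>
  proof -
    have "(\<integral>\<^sup>+p. ennreal (K0 s \<epsilon> \<sigma> \<xi> (fst p) (snd p)) * G1 (fst p) * G2 (\<xi> - fst p - snd p) * G3 (snd p) \<partial>(lborel \<Otimes>\<^sub>M lborel))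
      \<le> (\<integral>\<^sup>+p. (kA s \<epsilon> \<sigma> (\<xi>, fst p, snd p) + kA s \<epsilon> \<sigma> (\<xi>, snd p, fst p)) * G1 (fst p) * G2 (\<xi> - fst p - snd p) * G3 (snd p) \<partial>(lborel \<Otimes>\<^sub>M lborel))"
      by (intro nn_integral_mono mult_right_mono K0_split) simp_all
    also have "\<dots> = FA \<xi> + (\<integral>\<^sup>+p. kA s \<epsilon> \<sigma> (\<xi>, snd p, fst p) * G1 (fst p) * G2 (\<xi> - fst p - snd p) * G3 (snd p) \<partial>(lborel \<Otimes>\<^sub>M lborel))"
      unfolding FA_def by (subst nn_integral_add[symmetric]) (measurable, simp add: distrib_right)
    also have "(\<integral>\<^sup>+p. kA s \<epsilon> \<sigma> (\<xi>, snd p, fst p) * G1 (fst p) * G2 (\<xi> - fst p - snd p) * G3 (snd p) \<partial>(lborel \<Otimes>\<^sub>M lborel)) = FB \<xi>"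
    proof -
      define g where "g = (\<lambda>p. kA s \<epsilon> \<sigma> (\<xi>, fst p, snd p) * G3 (fst p) * G2 (\<xi> - fst p - snd p) * G1 (snd p))"
      have gm: "g \<in> borel_measurable (lborel \<Otimes>\<^sub>M lborel)" unfolding g_def by measurable
      have "(\<integral>\<^sup>+p. g (snd p, fst p) \<partial>(lborel \<Otimes>\<^sub>M lborel)) = (\<integral>\<^sup>+p. g p \<partial>(lborel \<Otimes>\<^sub>M lborel))"
        by (rule pair_swap[OF gm])
      thus ?thesis unfolding g_def FB_def by (simp add: mult_ac diff_diff_eq add.commute)
    qed
    finally show ?thesis .
  qed
  have "(\<integral>\<^sup>+\<xi>. (\<integral>\<^sup>+p. ennreal (K0 s \<epsilon> \<sigma> \<xi> (fst p) (snd p)) * G1 (fst p) * G2 (\<xi> - fst p - snd p) * G3 (snd p) \<partial>(lborel \<Otimes>\<^sub>M lborel))\<^sup>2 \<partial>lborel)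
      \<le> (\<integral>\<^sup>+\<xi>. 2 * (FA \<xi>)\<^sup>2 + 2 * (FB \<xi>)\<^sup>2 \<partial>lborel)"
    by (intro nn_integral_mono order_trans[OF power_mono[OF pt] sq_sum_le]) simp
  also have "\<dots> = 2 * (\<integral>\<^sup>+\<xi>. (FA \<xi>)\<^sup>2 \<partial>lborel) + 2 * (\<integral>\<^sup>+\<xi>. (FB \<xi>)\<^sup>2 \<partial>lborel)"
    by (simp add: nn_integral_add nn_integral_cmult)
  also have "\<dots> \<le> 2 * (S\<^sup>2 * N1 * N2 * N3) + 2 * (S\<^sup>2 * N3 * N2 * N1)"
  proof (intro add_mono mult_left_mono)
    show "(\<integral>\<^sup>+\<xi>. (FA \<xi>)\<^sup>2 \<partial>lborel) \<le> S\<^sup>2 * N1 * N2 * N3"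
      unfolding FA_def S_def N1_def N2_def N3_def by (rule schur) (simp_all add: S1 S2)
    show "(\<integral>\<^sup>+\<xi>. (FB \<xi>)\<^sup>2 \<partial>lborel) \<le> S\<^sup>2 * N3 * N2 * N1"
      unfolding FB_def S_def N1_def N2_def N3_def by (rule schur) (simp_all add: S1 S2)
  qed simp_all
  also have "\<dots> = 4 * S\<^sup>2 * N1 * N2 * N3"
  proof -
    have e: "S\<^sup>2 * N3 * N2 * N1 = S\<^sup>2 * N1 * N2 * N3" by (simp add: mult_ac)
    have "2 * (S\<^sup>2 * N1 * N2 * N3) + 2 * (S\<^sup>2 * N1 * N2 * N3) = (2 + 2) * (S\<^sup>2 * N1 * N2 * N3)"
      by (rule distrib_right[symmetric])
    thus ?thesis unfolding e by (simp add: mult.assoc)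
  qed
  finally show ?thesis unfolding S_def N1_def N2_def N3_def .
qed

end

definition Gf :: "real \<Rightarrow> (real \<Rightarrow> complex) \<Rightarrow> real \<Rightarrow> ennreal" where
  "Gf s f x = ennreal (japan x powr s * cmod (f x))"

lemma Gf_meas[measurable]: "f \<in> borel_measurable borel \<Longrightarrow> Gf s f \<in> borel_measurable borel"
  unfolding Gf_def by measurable

lemma Gf_sq:
  assumes "in_Hs_hat s f"
  shows "(\<integral>\<^sup>+x. (Gf s f x)\<^sup>2 \<partial>lborel) = ennreal ((Hs_norm_hat s f)\<^sup>2)"
proof -
  have fm[measurable]: "f \<in> borel_measurable borel" using assms unfolding in_Hs_hat_def by simp
  have int: "integrable lborel (\<lambda>\<xi>. japan \<xi> powr (2 * s) * (cmod (f \<xi>))\<^sup>2)"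
    using assms unfolding in_Hs_hat_def by simp
  have pt: "(Gf s f x)\<^sup>2 = ennreal (japan x powr (2 * s) * (cmod (f x))\<^sup>2)" for x
  proof -
    have h: "(japan x powr s * cmod (f x))\<^sup>2 = japan x powr (2 * s) * (cmod (f x))\<^sup>2"
    proof -
      have "japan x powr (2 * s) = japan x powr s * japan x powr s" by (simp only: mult_2 powr_add)
      thus ?thesis by (simp only: power_mult_distrib power2_eq_square mult_ac)
    qed
    show ?thesis unfolding Gf_def by (subst ennreal_power) (simp_all add: h)
  qed
  have "(\<integral>\<^sup>+x. (Gf s f x)\<^sup>2 \<partial>lborel) = ennreal (\<integral>\<xi>. japan \<xi> powr (2 * s) * (cmod (f \<xi>))\<^sup>2 \<partial>lborel)"
    unfolding pt by (rule nn_integral_eq_integral[OF int]) simp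
  moreover have "(Hs_norm_hat s f)\<^sup>2 = (\<integral>\<xi>. japan \<xi> powr (2 * s) * (cmod (f \<xi>))\<^sup>2 \<partial>lborel)"
    unfolding Hs_norm_hat_def by (simp add: integral_nonneg_AE)
  ultimately show ?thesis by simp
qed

lemma Phi_eq: "Phi \<xi> \<xi>1 (\<xi> - \<xi>1 - \<xi>3) \<xi>3 = 2 * (\<xi> - \<xi>1) * (\<xi> - \<xi>3)"
  unfolding Phi_def by (simp add: power2_eq_square algebra_simps)

lemma integrand_eq:
  "ennreal (japan \<xi> powr (s+\<epsilon>)) * ennreal (norm (T_integrand \<sigma> f1 f2 f3 \<xi> p))
   = ennreal (K0 s \<epsilon> \<sigma> \<xi> (fst p) (snd p)) * Gf s f1 (fst p) * Gf s f2 (\<xi> - fst p - snd p) * Gf s f3 (snd p)"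
proof -
  obtain \<xi>1 \<xi>3 where p: "p = (\<xi>1, \<xi>3)" by (cases p)
  define \<xi>2 where "\<xi>2 = \<xi> - \<xi>1 - \<xi>3"
  define JP where "JP = japan (2 * (\<xi> - \<xi>1) * (\<xi> - \<xi>3)) powr (-\<sigma>)"
  have nT: "norm (T_integrand \<sigma> f1 f2 f3 \<xi> p) = JP * \<bar>\<xi>2\<bar> * cmod (f1 \<xi>1) * cmod (f2 \<xi>2) * cmod (f3 \<xi>3)"
  proof -
    have Teq: "T_integrand \<sigma> f1 f2 f3 \<xi> p = complex_of_real (JP * \<xi>2) * f1 \<xi>1 * f2 \<xi>2 * f3 \<xi>3"
      unfolding T_integrand_def p JP_def \<xi>2_def Let_def by (simp only: fst_conv snd_conv Phi_eq)
    have "\<bar>JP\<bar> = JP" unfolding JP_def by simp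
    thus ?thesis unfolding Teq norm_mult norm_of_real abs_mult by simp
  qed
  have j: "0 < japan \<xi>1 powr s" "0 < japan \<xi>2 powr s" "0 < japan \<xi>3 powr s"
    using japan_pos[of \<xi>1] japan_pos[of \<xi>2] japan_pos[of \<xi>3] by simp_all
  have R0: "japan \<xi> powr (s+\<epsilon>) * (JP * \<bar>\<xi>2\<bar> * cmod (f1 \<xi>1) * cmod (f2 \<xi>2) * cmod (f3 \<xi>3))
      = K0 s \<epsilon> \<sigma> \<xi> \<xi>1 \<xi>3 * (japan \<xi>1 powr s * cmod (f1 \<xi>1)) * (japan \<xi>2 powr s * cmod (f2 \<xi>2)) * (japan \<xi>3 powr s * cmod (f3 \<xi>3))"
  proof -
    define D where "D = japan \<xi>1 powr s * japan \<xi>2 powr s * japan \<xi>3 powr s"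
    define Nm where "Nm = japan \<xi> powr (s+\<epsilon>) * \<bar>\<xi>2\<bar> * JP"
    have D0: "D \<noteq> 0" unfolding D_def using j by simp
    have K: "K0 s \<epsilon> \<sigma> \<xi> \<xi>1 \<xi>3 = Nm / D" unfolding K0_def Nm_def D_def JP_def \<xi>2_def ..
    have "K0 s \<epsilon> \<sigma> \<xi> \<xi>1 \<xi>3 * (japan \<xi>1 powr s * cmod (f1 \<xi>1)) * (japan \<xi>2 powr s * cmod (f2 \<xi>2)) * (japan \<xi>3 powr s * cmod (f3 \<xi>3))
        = (Nm / D) * D * (cmod (f1 \<xi>1) * cmod (f2 \<xi>2) * cmod (f3 \<xi>3))"
      unfolding K D_def by (simp only: mult_ac)
    also have "\<dots> = Nm * (cmod (f1 \<xi>1) * cmod (f2 \<xi>2) * cmod (f3 \<xi>3))" using D0 by simp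
    finally show ?thesis unfolding Nm_def by (simp only: mult_ac)
  qed
  have R: "japan \<xi> powr (s+\<epsilon>) * norm (T_integrand \<sigma> f1 f2 f3 \<xi> p)
      = K0 s \<epsilon> \<sigma> \<xi> (fst p) (snd p) * (japan (fst p) powr s * cmod (f1 (fst p))) * (japan (\<xi> - fst p - snd p) powr s * cmod (f2 (\<xi> - fst p - snd p))) * (japan (snd p) powr s * cmod (f3 (snd p)))"
    unfolding nT R0 by (simp add: p \<xi>2_def)
  have nn: "0 \<le> K0 s \<epsilon> \<sigma> \<xi> (fst p) (snd p)" by (rule K0_nonneg)
  have nn2: "0 \<le> japan \<xi> powr (s+\<epsilon>)" "0 \<le> norm (T_integrand \<sigma> f1 f2 f3 \<xi> p)" by simp_all
  have "ennreal (japan \<xi> powr (s+\<epsilon>)) * ennreal (norm (T_integrand \<sigma> f1 f2 f3 \<xi> p))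
      = ennreal (japan \<xi> powr (s+\<epsilon>) * norm (T_integrand \<sigma> f1 f2 f3 \<xi> p))"
    using nn2 by (rule ennreal_mult[symmetric])
  also have "\<dots> = ennreal (K0 s \<epsilon> \<sigma> \<xi> (fst p) (snd p)) * Gf s f1 (fst p) * Gf s f2 (\<xi> - fst p - snd p) * Gf s f3 (snd p)"
    unfolding R Gf_def using nn by (simp add: ennreal_mult)
  finally show ?thesis .
qed

lemma T_integrand_meas[measurable]:
  assumes [measurable]: "f1 \<in> borel_measurable borel" "f2 \<in> borel_measurable borel" "f3 \<in> borel_measurable borel"
  shows "(\<lambda>x. T_integrand \<sigma> f1 f2 f3 (fst x) (snd x)) \<in> borel_measurable (lborel \<Otimes>\<^sub>M (lborel \<Otimes>\<^sub>M lborel))"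
  unfolding T_integrand_def Let_def Phi_def by measurable

lemma T_integrand_meas2[measurable]:
  assumes [measurable]: "f1 \<in> borel_measurable borel" "f2 \<in> borel_measurable borel" "f3 \<in> borel_measurable borel"
  shows "T_integrand \<sigma> f1 f2 f3 \<xi> \<in> borel_measurable (lborel \<Otimes>\<^sub>M lborel)"
  unfolding T_integrand_def Let_def Phi_def by measurable

lemma T_hat_eq: "T_hat \<sigma> f1 f2 f3 \<xi> = (\<integral>p. T_integrand \<sigma> f1 f2 f3 \<xi> p \<partial>(lborel \<Otimes>\<^sub>M lborel))"
  unfolding T_hat_def lborel_prod ..

lemma T_hat_meas:
  assumes [measurable]: "f1 \<in> borel_measurable borel" "f2 \<in> borel_measurable borel" "f3 \<in> borel_measurable borel"
  shows "T_hat \<sigma> f1 f2 f3 \<in> borel_measurable lborel"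
proof -
  have "(\<lambda>\<xi>. \<integral>p. T_integrand \<sigma> f1 f2 f3 \<xi> p \<partial>(lborel \<Otimes>\<^sub>M lborel)) \<in> borel_measurable lborel"
    by measurable
  thus ?thesis unfolding T_hat_eq[abs_def] .
qed


lemma final_bound:
  fixes s \<epsilon> \<sigma> q :: real
  assumes P: "params s \<epsilon> \<sigma> q"
    and H: "in_Hs_hat s f1" "in_Hs_hat s f2" "in_Hs_hat s f3"
  defines "C \<equiv> 2 * (params.C0 s * params.CJ \<sigma> q)"
  shows "(AE \<xi> in lborel. integrable lborel (T_integrand \<sigma> f1 f2 f3 \<xi>)) \<and>
       in_Hs_hat (s + \<epsilon>) (T_hat \<sigma> f1 f2 f3) \<and>
       Hs_norm_hat (s + \<epsilon>) (T_hat \<sigma> f1 f2 f3)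
         \<le> C * Hs_norm_hat s f1 * Hs_norm_hat s f2 * Hs_norm_hat s f3"
proof -
  interpret params s \<epsilon> \<sigma> q by (rule P)
  have C_eq: "C = 2 * (C0 * CJ)" unfolding C_def C0_def CJ_def ..
  have Cnn: "0 \<le> C" unfolding C_eq using C0_pos CJ_pos by simp
  have fm[measurable]: "f1 \<in> borel_measurable borel" "f2 \<in> borel_measurable borel" "f3 \<in> borel_measurable borel"
    using H unfolding in_Hs_hat_def by simp_all
  define H1 where "H1 = Hs_norm_hat s f1"
  define H2 where "H2 = Hs_norm_hat s f2"
  define H3 where "H3 = Hs_norm_hat s f3"
  have Hnn: "0 \<le> H1" "0 \<le> H2" "0 \<le> H3" unfolding H1_def H2_def H3_def Hs_norm_hat_def by simp_all
  define I where "I = (\<lambda>\<xi>. \<integral>\<^sup>+p. ennreal (norm (T_integrand \<sigma> f1 f2 f3 \<xi> p)) \<partial>(lborel \<Otimes>\<^sub>M lborel))"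
  have Im[measurable]: "I \<in> borel_measurable lborel" unfolding I_def by measurable
  have Feq: "ennreal (japan \<xi> powr (s+\<epsilon>)) * I \<xi> =
     (\<integral>\<^sup>+p. ennreal (K0 s \<epsilon> \<sigma> \<xi> (fst p) (snd p)) * Gf s f1 (fst p) * Gf s f2 (\<xi> - fst p - snd p) * Gf s f3 (snd p) \<partial>(lborel \<Otimes>\<^sub>M lborel))" for \<xi>
  proof -
    have "ennreal (japan \<xi> powr (s+\<epsilon>)) * I \<xi> = (\<integral>\<^sup>+p. ennreal (japan \<xi> powr (s+\<epsilon>)) * ennreal (norm (T_integrand \<sigma> f1 f2 f3 \<xi> p)) \<partial>(lborel \<Otimes>\<^sub>M lborel))"
      unfolding I_def by (rule nn_integral_cmult[symmetric]) measurable
    also have "\<dots> = (\<integral>\<^sup>+p. ennreal (K0 s \<epsilon> \<sigma> \<xi> (fst p) (snd p)) * Gf s f1 (fst p) * Gf s f2 (\<xi> - fst p - snd p) * Gf s f3 (snd p) \<partial>(lborel \<Otimes>\<^sub>M lborel))"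
      by (rule nn_integral_cong) (rule integrand_eq)
    finally show ?thesis .
  qed
  define Tot where "Tot = ennreal ((C * H1 * H2 * H3)\<^sup>2)"
  have Fbound: "(\<integral>\<^sup>+\<xi>. (ennreal (japan \<xi> powr (s+\<epsilon>)) * I \<xi>)\<^sup>2 \<partial>lborel) \<le> Tot"
  proof -
    have "(\<integral>\<^sup>+\<xi>. (ennreal (japan \<xi> powr (s+\<epsilon>)) * I \<xi>)\<^sup>2 \<partial>lborel)
        \<le> 4 * (ennreal (C0 * CJ))\<^sup>2 * (\<integral>\<^sup>+x. (Gf s f1 x)\<^sup>2 \<partial>lborel) * (\<integral>\<^sup>+x. (Gf s f2 x)\<^sup>2 \<partial>lborel) * (\<integral>\<^sup>+x. (Gf s f3 x)\<^sup>2 \<partial>lborel)"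
      unfolding Feq by (rule main_bound) measurable
    also have "\<dots> = 4 * (ennreal (C0 * CJ))\<^sup>2 * ennreal (H1\<^sup>2) * ennreal (H2\<^sup>2) * ennreal (H3\<^sup>2)"
      unfolding H1_def H2_def H3_def using H by (simp add: Gf_sq)
    also have "\<dots> = Tot"
    proof -
      have "(C * H1 * H2 * H3)\<^sup>2 = 4 * (C0 * CJ)\<^sup>2 * H1\<^sup>2 * H2\<^sup>2 * H3\<^sup>2"
        unfolding C_eq by (simp add: power_mult_distrib)
      moreover have "0 \<le> C0 * CJ" using C0_pos CJ_pos by simp
      ultimately show ?thesis unfolding Tot_def
        by (simp add: ennreal_mult ennreal_power mult_nonneg_nonneg)
    qed
    finally show ?thesis .
  qed
  have Tot_fin: "Tot < \<infinity>" unfolding Tot_def by simp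
  have pt: "ennreal (japan \<xi> powr (2 * (s + \<epsilon>)) * (cmod (T_hat \<sigma> f1 f2 f3 \<xi>))\<^sup>2) \<le> (ennreal (japan \<xi> powr (s+\<epsilon>)) * I \<xi>)\<^sup>2" for \<xi>
  proof -
    have n: "ennreal (cmod (T_hat \<sigma> f1 f2 f3 \<xi>)) \<le> I \<xi>"
    proof (cases "integrable (lborel \<Otimes>\<^sub>M lborel) (T_integrand \<sigma> f1 f2 f3 \<xi>)")
      case True
      show ?thesis unfolding T_hat_eq I_def by (rule integral_norm_bound_ennreal[OF True])
    next
      case False
      show ?thesis unfolding T_hat_eq using False by (simp add: not_integrable_integral_eq)
    qed
    have jp: "0 \<le> japan \<xi> powr (s+\<epsilon>)" by simp
    have "japan \<xi> powr (2 * (s + \<epsilon>)) * (cmod (T_hat \<sigma> f1 f2 f3 \<xi>))\<^sup>2 = (japan \<xi> powr (s+\<epsilon>) * cmod (T_hat \<sigma> f1 f2 f3 \<xi>))\<^sup>2"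
    proof -
      have "japan \<xi> powr (2 * (s + \<epsilon>)) = japan \<xi> powr (s+\<epsilon>) * japan \<xi> powr (s+\<epsilon>)" by (simp only: mult_2 powr_add)
      thus ?thesis by (simp only: power_mult_distrib power2_eq_square mult_ac)
    qed
    hence "ennreal (japan \<xi> powr (2 * (s + \<epsilon>)) * (cmod (T_hat \<sigma> f1 f2 f3 \<xi>))\<^sup>2) = (ennreal (japan \<xi> powr (s+\<epsilon>)) * ennreal (cmod (T_hat \<sigma> f1 f2 f3 \<xi>)))\<^sup>2"
      using jp by (simp add: ennreal_mult ennreal_power[symmetric])
    also have "\<dots> \<le> (ennreal (japan \<xi> powr (s+\<epsilon>)) * I \<xi>)\<^sup>2"
      by (intro power_mono mult_left_mono n) simp_all
    finally show ?thesis .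
  qed
  have Tm: "T_hat \<sigma> f1 f2 f3 \<in> borel_measurable lborel" by (rule T_hat_meas) (rule fm)+
  have Wm[measurable]: "(\<lambda>\<xi>. japan \<xi> powr (2 * (s + \<epsilon>)) * (cmod (T_hat \<sigma> f1 f2 f3 \<xi>))\<^sup>2) \<in> borel_measurable lborel"
    using Tm by measurable
  have Wint: "(\<integral>\<^sup>+\<xi>. ennreal (japan \<xi> powr (2 * (s + \<epsilon>)) * (cmod (T_hat \<sigma> f1 f2 f3 \<xi>))\<^sup>2) \<partial>lborel) \<le> Tot"
    using nn_integral_mono[OF pt] Fbound by (rule order_trans)
  have integ: "integrable lborel (\<lambda>\<xi>. japan \<xi> powr (2 * (s + \<epsilon>)) * (cmod (T_hat \<sigma> f1 f2 f3 \<xi>))\<^sup>2)"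
  proof (rule integrableI_bounded)
    show "(\<integral>\<^sup>+\<xi>. ennreal (norm (japan \<xi> powr (2 * (s + \<epsilon>)) * (cmod (T_hat \<sigma> f1 f2 f3 \<xi>))\<^sup>2)) \<partial>lborel) < \<infinity>"
      using Wint Tot_fin by simp
  qed measurable
  have inHs: "in_Hs_hat (s + \<epsilon>) (T_hat \<sigma> f1 f2 f3)"
    unfolding in_Hs_hat_def using Tm integ by simp
  have "ennreal (\<integral>\<xi>. japan \<xi> powr (2 * (s + \<epsilon>)) * (cmod (T_hat \<sigma> f1 f2 f3 \<xi>))\<^sup>2 \<partial>lborel) \<le> Tot"
    using Wint by (subst nn_integral_eq_integral[OF integ, symmetric]) simp_all
  hence "(\<integral>\<xi>. japan \<xi> powr (2 * (s + \<epsilon>)) * (cmod (T_hat \<sigma> f1 f2 f3 \<xi>))\<^sup>2 \<partial>lborel) \<le> (C * H1 * H2 * H3)\<^sup>2"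
    unfolding Tot_def by (simp add: ennreal_le_iff)
  hence nb: "Hs_norm_hat (s + \<epsilon>) (T_hat \<sigma> f1 f2 f3) \<le> C * H1 * H2 * H3"
    unfolding Hs_norm_hat_def using Cnn Hnn by (intro real_le_lsqrt) simp_all
  have AEfin: "AE \<xi> in lborel. (ennreal (japan \<xi> powr (s+\<epsilon>)) * I \<xi>)\<^sup>2 \<noteq> \<infinity>"
  proof (rule nn_integral_PInf_AE)
    show "(\<lambda>\<xi>. (ennreal (japan \<xi> powr (s+\<epsilon>)) * I \<xi>)\<^sup>2) \<in> borel_measurable lborel" by measurable
    have "(\<integral>\<^sup>+\<xi>. (ennreal (japan \<xi> powr (s+\<epsilon>)) * I \<xi>)\<^sup>2 \<partial>lborel) < \<infinity>"
      using Fbound Tot_fin by (rule le_less_trans)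
    thus "(\<integral>\<^sup>+\<xi>. (ennreal (japan \<xi> powr (s+\<epsilon>)) * I \<xi>)\<^sup>2 \<partial>lborel) \<noteq> \<infinity>" by simp
  qed
  have AEint: "AE \<xi> in lborel. integrable lborel (T_integrand \<sigma> f1 f2 f3 \<xi>)"
    using AEfin
  proof eventually_elim
    case (elim \<xi>)
    have "I \<xi> \<noteq> \<infinity>"
    proof
      assume "I \<xi> = \<infinity>"
      moreover have "0 < japan \<xi> powr (s+\<epsilon>)" using japan_pos[of \<xi>] by simp
      ultimately show False using elim by (simp add: ennreal_mult_top)
    qed
    hence "integrable (lborel \<Otimes>\<^sub>M lborel) (T_integrand \<sigma> f1 f2 f3 \<xi>)"
      unfolding I_def by (intro integrableI_bounded) (measurable, simp add: top.not_eq_extremum)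
    thus ?case by (simp only: lborel_prod)
  qed
  show ?thesis using AEint inHs nb unfolding H1_def H2_def H3_def by simp
qed


theorem lemma12:
  fixes s \<epsilon> :: real
  assumes "s > 1/2" and "0 < \<epsilon>" and "\<epsilon> < min 1 (2 * s - 1)"
  shows "\<exists>\<sigma> C. 0 < \<sigma> \<and> \<sigma> < 1 \<and> C > 0 \<and>
    (\<forall>f1 f2 f3. in_Hs_hat s f1 \<and> in_Hs_hat s f2 \<and> in_Hs_hat s f3 \<longrightarrow>
       (AE \<xi> in lborel. integrable lborel (T_integrand \<sigma> f1 f2 f3 \<xi>)) \<and>
       in_Hs_hat (s + \<epsilon>) (T_hat \<sigma> f1 f2 f3) \<and>
       Hs_norm_hat (s + \<epsilon>) (T_hat \<sigma> f1 f2 f3)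
         \<le> C * Hs_norm_hat s f1 * Hs_norm_hat s f2 * Hs_norm_hat s f3)"
proof -
  define s' where "s' = min s 1"
  define q where "q = (\<epsilon> + s') / 2"
  define \<sigma> where "\<sigma> = (4 + \<epsilon> - q) / 4"
  have e1: "\<epsilon> < 1" "\<epsilon> < 2 * s - 1" using assms(3) by simp_all
  have s'1: "1 + \<epsilon> < 2 * s'" "\<epsilon> < s'" "s' \<le> 1" "s' \<le> s"
    unfolding s'_def using e1 assms(1) by (auto simp: min_def)
  have P: "params s \<epsilon> \<sigma> q"
  proof
    show "1/2 < s" "0 < \<epsilon>" using assms by simp_all
    show "\<epsilon> \<le> 1" using e1 by simp
    show "1 + \<epsilon> < 2 * min s 1" using s'1 unfolding s'_def by simp
    show "0 < q" unfolding q_def using s'1 assms(2) by simp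
    show "q \<le> min s 1" unfolding q_def s'_def[symmetric] using s'1 by simp
    show "q < 1" unfolding q_def using s'1 by simp
    show "1/2 \<le> \<sigma>" unfolding \<sigma>_def q_def using s'1 e1 assms(2) by (simp add: field_simps)
    show "\<sigma> < 1" unfolding \<sigma>_def q_def using s'1 by (simp add: field_simps)
    show "2 + \<epsilon> - 2 * \<sigma> - q \<le> 0" unfolding \<sigma>_def q_def using s'1 by (simp add: field_simps)
  qed
  define C where "C = 2 * (params.C0 s * params.CJ \<sigma> q)"
  have "0 < params.C0 s" "0 < params.CJ \<sigma> q"
    using params.C0_pos[OF P] params.CJ_pos[OF P] by simp_all
  hence Cpos: "0 < C" unfolding C_def by simp
  have sig: "0 < \<sigma>" "\<sigma> < 1" using params.sig_ge[OF P] params.sig_lt[OF P] by simp_all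
  have main: "\<forall>f1 f2 f3. in_Hs_hat s f1 \<and> in_Hs_hat s f2 \<and> in_Hs_hat s f3 \<longrightarrow>
       (AE \<xi> in lborel. integrable lborel (T_integrand \<sigma> f1 f2 f3 \<xi>)) \<and>
       in_Hs_hat (s + \<epsilon>) (T_hat \<sigma> f1 f2 f3) \<and>
       Hs_norm_hat (s + \<epsilon>) (T_hat \<sigma> f1 f2 f3)
         \<le> C * Hs_norm_hat s f1 * Hs_norm_hat s f2 * Hs_norm_hat s f3"
  proof (intro allI impI)
    fix f1 f2 f3
    assume "in_Hs_hat s f1 \<and> in_Hs_hat s f2 \<and> in_Hs_hat s f3"
    hence H: "in_Hs_hat s f1" "in_Hs_hat s f2" "in_Hs_hat s f3" by simp_all
    show "(AE \<xi> in lborel. integrable lborel (T_integrand \<sigma> f1 f2 f3 \<xi>)) \<and>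
       in_Hs_hat (s + \<epsilon>) (T_hat \<sigma> f1 f2 f3) \<and>
       Hs_norm_hat (s + \<epsilon>) (T_hat \<sigma> f1 f2 f3)
         \<le> C * Hs_norm_hat s f1 * Hs_norm_hat s f2 * Hs_norm_hat s f3"
      unfolding C_def by (rule final_bound[OF P H])
  qed
  show ?thesis using sig Cpos main by blast
qed


end
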